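(* Let $T\ge 1$ be an integer and run proximal SGD from a deterministic point $x_0\in\mathbb{R}^n$ with constant step size $\tau = \frac{1}{3L\sqrt{T}}$, i.e. $x_{t+1}=\operatorname{prox}_{\tau g}(x_t-\tau\nabla f_{i_t}(x_t))$ for $t=0,1,\dots,T$. Then \[ \mathbb{E}\left[h(x_{T+1})-h^*\right]\le \frac{9}{\sqrt{T}}\left[L D_*^2+\frac{1}{\sqrt{T}}\bigl(h(x_0)-h^*\bigr)+\frac{\sigma_*^2}{L}\Bigl(\frac{1}{T}+4\ln(T+1)\Bigr)\right]. \]
   Context: Setting. Let $D$ be a probability distribution on an index set, and for each index $i$ let $f_i:\mathbb{R}^n\to\mathbb{R}$ be convex and differentiable with $L$-Lipschitz gradient ($L>0$). Let $f(x)=\mathbb{E}_{i\sim D}[f_i(x)]$, with $\mathbb{E}_{i\sim D}[\nabla f_i(x)]=\nabla f(x)$ for all $x$. Let $g:\mathbb{R}^n\to\mathbb{R}\cup\{+\infty\}$ be proper, convex and lower semicontinuous, and $h=f+g$. Assume the solution set $X^*=\arg\min_x h(x)$ is nonempty, write $h^*=\min h$, $D_*^2=\min_{x^*\in X^*}\|x^*-x_0\|^2$, and assume $\sigma_*^2:=\mathbb{E}_{i\sim D}\|\nabla f_i(x^* )\|^2<\infty$ for some $x^*\in X^*$. For $\tau>0$, $\operatorname{prox}_{\tau g}(y)=\arg\min_z\{\tau g(z)+\tfrac12\|y-z\|^2\}$. The indices $i_0,i_1,\dots$ are drawn i.i.d. from $D$, with $i_t$ independent of $x_0,\dots,x_t$.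 *)

theory Defs
  imports "HOL-Probability.Probability"
begin

text \<open>Proximal operator of the extended-valued function that equals g on its
  (nonempty, convex) effective domain C and +infinity outside C:
  prox_{tau g}(y) = argmin_z { tau g(z) + 1/2 norm(y - z)^2 }.\<close>
definition prox :: "'a::real_inner set \<Rightarrow> ('a \<Rightarrow> real) \<Rightarrow> real \<Rightarrow> 'a \<Rightarrow> 'a" where
  "prox C g \<tau> y = (THE p. p \<in> C \<and>
      (\<forall>z\<in>C. \<tau> * g p + (norm (y - p))\<^sup>2 / 2 \<le> \<tau> * g z + (norm (y - z))\<^sup>2 / 2))"

primrec psgd :: "('a::real_vector \<Rightarrow> 'a) \<Rightarrow> ('i \<Rightarrow> 'a \<Rightarrow> 'a) \<Rightarrow> real \<Rightarrow> 'a \<Rightarrow> (nat \<Rightarrow> 'i) \<Rightarrow> nat \<Rightarrow> 'a" where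
  "psgd P G \<tau> x0 \<omega> 0 = x0"
| "psgd P G \<tau> x0 \<omega> (Suc t) = P (psgd P G \<tau> x0 \<omega> t - \<tau> *\<^sub>R G (\<omega> t) (psgd P G \<tau> x0 \<omega> t))"

end

theory Submission
  imports Defs "HOL-Probability.Probability"
begin

lemma inv_le_ln_diff:
  assumes "(k::real) \<ge> 1"
  shows "1 / (k + 1) \<le> ln (k + 1) - ln k"
proof -
  have "ln (k / (k+1)) \<le> k/(k+1) - 1" using assms by (intro ln_le_minus_one) auto
  moreover have "ln (k/(k+1)) = ln k - ln (k+1)" using assms by (simp add: ln_div)
  moreover have "k/(k+1) - 1 = - 1/(k+1)" using assms by (simp add: field_simps)
  ultimately show ?thesis by simp
qed

lemma suffix_rec:
  fixes S :: "nat \<Rightarrow> real" and c s :: real and T :: nat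
  assumes c: "c \<ge> 0" and s: "s \<ge> 0" and S0: "\<And>k. S k \<ge> 0"
    and rec: "\<And>k. k < T \<Longrightarrow> S k \<le> (1 + c / (k+1)) * S (Suc k) + s / (k+2)"
    and T: "T \<ge> 1"
  shows "S 0 \<le> exp (c * (1 + ln T)) * (S T + s * ln (T + 1))"
proof -
  have main: "S (T - j) \<le> exp (c * (ln T - ln (T - j))) * (S T + s * (ln (T+1) - ln (T - j + 1)))"
    if "j < T" for j
    using that
  proof (induction j)
    case 0 then show ?case by simp
  next
    case (Suc j)
    define k where "k = T - Suc j"
    have k1: "k \<ge> 1" "k < T" and kj: "Suc k = T - j" using Suc.prems unfolding k_def by auto
    have IH: "S (Suc k) \<le> exp (c * (ln T - ln (Suc k))) * (S T + s * (ln (T+1) - ln (Suc k + 1)))"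
      using Suc.IH Suc.prems kj by (simp add: of_nat_diff)
    have lnk: "1 / (real k + 1) \<le> ln (real k + 1) - ln k"
      using inv_le_ln_diff[of "real k"] k1 by simp
    have lnk2: "1 / (real k + 2) \<le> ln (real k + 2) - ln (k+1)"
      using inv_le_ln_diff[of "real k + 1"] k1 by (simp add: ac_simps)
    have lnT: "ln (1 + real k) \<le> ln T" using k1 by simp
    have lnT2: "ln (2 + real k) \<le> ln (1 + real T)" using k1 by simp
    define E where "E = exp (c * (ln T - ln (Suc k)))"
    have E1: "E \<ge> 1" unfolding E_def using c lnT by simp
    define B where "B = S T + s * (ln (T+1) - ln (Suc k + 1))"
    have B0: "B \<ge> 0" unfolding B_def using S0[of T] s lnT2 by (simp add: ac_simps)
    have "S k \<le> (1 + c / (k+1)) * S (Suc k) + s / (k+2)" using rec[OF k1(2)] by (simp add: ac_simps)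
    also have "\<dots> \<le> exp (c / (k+1)) * (E * B) + s / (k+2)"
      apply (intro add_mono mult_mono)
      using IH c S0 E1 B0 unfolding E_def B_def by (auto simp: add.commute)
    also have "exp (c / (k+1)) * (E * B) = (exp (c / (k+1)) * E) * B" by simp
    also have "exp (c / (k+1)) * E = exp (c / (k+1) + c * (ln T - ln (Suc k)))"
      unfolding E_def by (simp add: exp_add)
    also have "\<dots> \<le> exp (c * (ln T - ln k))"
    proof -
      have "c / (k+1) \<le> c * (ln (1 + real k) - ln k)"
        using mult_left_mono[OF lnk c] by (simp add: ac_simps)
      then have "c / (k+1) + c * (ln T - ln (Suc k)) \<le> c * (ln T - ln k)"
        by (simp add: algebra_simps)
      then show ?thesis by simp
    qed
    finally have "S k \<le> exp (c * (ln T - ln k)) * B + s / (k+2)" using B0 by (simp add: mult_right_mono)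
    also have "s / (k+2) \<le> exp (c * (ln T - ln k)) * (s * (ln (real k + 2) - ln (k+1)))"
    proof -
      have "s * (1 / (k+2)) \<le> s * (ln (real k + 2) - ln (k+1))" using lnk2 s
        by (intro mult_left_mono) (auto simp: ac_simps)
      then have "s / (k+2) \<le> s * (ln (real k + 2) - ln (k+1))" by simp
      also have "\<dots> \<le> exp (c * (ln T - ln k)) * (s * (ln (real k + 2) - ln (k+1)))"
      proof -
        have e1: "1 \<le> exp (c * (ln T - ln k))" using c k1 by simp
        have x0: "0 \<le> s * (ln (real k + 2) - ln (k+1))" using s by simp
        show ?thesis using mult_right_mono[OF e1 x0] by simp
      qed
      finally show ?thesis .
    qed
    finally show ?case unfolding B_def k_def[symmetric]
      by (simp add: algebra_simps of_nat_diff)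
  qed
  have S1: "S 1 \<le> exp (c * ln T) * (S T + s * (ln (T+1) - ln 2))"
    using main[of "T - 1"] T by (simp add: of_nat_diff)
  define E where "E = exp (c * (1 + ln T))"
  have E1: "E \<ge> 1" unfolding E_def using c T by simp
  have lnT1: "ln 2 \<le> ln (real T + 1)" using T by simp
  have B0: "0 \<le> S T + s * (ln (T+1) - ln 2)" using S0[of T] s lnT1 by simp
  have "S 0 \<le> (1 + c) * S 1 + s / 2" using rec[of 0] T by simp
  also have "\<dots> \<le> exp c * (exp (c * ln T) * (S T + s * (ln (T+1) - ln 2))) + s / 2"
    by (intro add_mono mult_mono S1) (use c S0 in auto)
  also have "exp c * (exp (c * ln T) * (S T + s * (ln (T+1) - ln 2))) = E * (S T + s * (ln (T+1) - ln 2))"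
  proof -
    have "exp c * exp (c * ln T) = E" unfolding E_def by (simp add: exp_add[symmetric] algebra_simps)
    then show ?thesis by (simp add: mult.assoc[symmetric])
  qed
  also have "s / 2 \<le> E * (s * ln 2)"
  proof -
    have "s * (1/2) \<le> s * ln 2" using ln2_ge_two_thirds s by (intro mult_left_mono) auto
    then have "s / 2 \<le> s * ln 2" by simp
    also have "\<dots> \<le> E * (s * ln 2)" using mult_right_mono[OF E1, of "s * ln 2"] s by simp
    finally show ?thesis .
  qed
  finally show ?thesis unfolding E_def by (simp add: algebra_simps)
qed

lemma sum_shift_le:
  fixes Q :: "nat \<Rightarrow> real"
  assumes Q0: "\<And>t. Q t \<ge> 0" and m: "m \<le> T"
  shows "(\<Sum>t\<in>{m..T}. Q t) \<le> Q m + (\<Sum>t\<in>{m..T}. Q (Suc t))"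
proof -
  have "(\<Sum>t\<in>{m..T}. Q t) = Q m + (\<Sum>t\<in>{Suc m..T}. Q t)"
    using m by (simp add: sum.atLeast_Suc_atMost)
  also have "(\<Sum>t\<in>{Suc m..T}. Q t) = (\<Sum>t\<in>{m..<T}. Q (Suc t))"
  proof -
    have "(\<Sum>t\<in>{Suc m..T}. Q t) = (\<Sum>t\<in>{Suc m..<Suc T}. Q t)"
      by (intro sum.cong) auto
    also have "\<dots> = (\<Sum>t\<in>{m..<T}. Q (Suc t))" by (rule sum.shift_bounds_Suc_ivl)
    finally show ?thesis .
  qed
  also have "\<dots> \<le> (\<Sum>t\<in>{m..T}. Q (Suc t))"
    by (intro sum_mono2) (auto simp: Q0)
  finally show ?thesis by simp
qed

lemma aux_frac:
  fixes a b c r u :: real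
  assumes "a > 0" "b > 0"
  shows "((a + c) * r + a * u) / (b * a) = (1 + c / a) * (r / b) + u / b"
  using assms by (simp add: field_simps)

lemma last_iter_real:
  fixes Q :: "nat \<Rightarrow> real" and A c s :: real and T :: nat
  assumes Q0: "\<And>t. Q t \<ge> 0" and c: "c \<ge> 0" "c < 1" and s: "s \<ge> 0" and A: "A \<ge> 0"
    and T: "T \<ge> 1"
    and avg: "(\<Sum>t\<le>T. Q (Suc t)) \<le> A + c * (\<Sum>t\<le>T. Q t) + (T+1) * s"
    and suf: "\<And>m. 1 \<le> m \<Longrightarrow> m \<le> T \<Longrightarrow>
       (\<Sum>t\<in>{m..T}. Q (Suc t)) \<le> (T - m + 1) * Q m + c * (\<Sum>t\<in>{m..T}. Q t) + (T - m + 1) * s"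
  shows "Q (Suc T) \<le> exp (c * (1 + ln T)) * ((A + c * Q 0 + (T+1) * s) / ((1 - c) * (T+1)) + s * ln (T+1))"
proof -
  define R where "R k = (\<Sum>t\<in>{T-k..T}. Q (Suc t))" for k
  define S where "S k = R k / (k+1)" for k
  have R0: "R k \<ge> 0" for k unfolding R_def by (intro sum_nonneg) (auto simp: Q0)
  have S0: "S k \<ge> 0" for k unfolding S_def using R0 by simp
  have rec: "S k \<le> (1 + c / (real k+1)) * S (Suc k) + s / (real k+2)" if k: "k < T" for k
  proof -
    define m where "m = T - k"
    have m: "1 \<le> m" "m \<le> T" using k unfolding m_def by auto
    have Rk: "R k = (\<Sum>t\<in>{m..T}. Q (Suc t))" unfolding R_def m_def ..
    have RSk: "R (Suc k) = R k + Q m"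
    proof -
      have "{T - Suc k..T} = insert (m - 1) {m..T}" using k unfolding m_def by auto
      moreover have "Suc (m - 1) = m" using m by simp
      ultimately show ?thesis unfolding R_def m_def[symmetric] by simp
    qed
    have Tm: "real (T - m + 1) = real k + 1" using k unfolding m_def by simp
    have "R k \<le> (k+1) * Q m + c * (\<Sum>t\<in>{m..T}. Q t) + (k+1) * s"
      using suf[OF m] Rk Tm by simp
    also have "c * (\<Sum>t\<in>{m..T}. Q t) \<le> c * (Q m + R k)"
      using sum_shift_le[OF Q0 m(2)] Rk c by (intro mult_left_mono) auto
    finally have "R k \<le> (k+1) * Q m + c * (Q m + R k) + (k+1) * s" by simp
    then have ineq: "(real k+2) * R k \<le> (real k+1+c) * R (Suc k) + (real k+1) * s"
      unfolding RSk by (simp add: algebra_simps)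
    have "S k = R k / (k+1)" unfolding S_def ..
    also have "\<dots> = ((real k+2) * R k) / ((real k+2)*(real k+1))"
      by (subst mult_divide_mult_cancel_left) auto
    also have "\<dots> \<le> ((real k+1+c) * R (Suc k) + (real k+1) * s) / ((real k+2)*(real k+1))"
      by (rule divide_right_mono[OF ineq]) simp
    also have "\<dots> = (1 + c / (k+1)) * S (Suc k) + s / (k+2)"
      unfolding S_def using aux_frac[of "real k + 1" "real k + 2" c "R (Suc k)" s]
      by (simp add: add.assoc add.commute)
    finally show ?thesis by (simp add: ac_simps)
  qed
  have main: "S 0 \<le> exp (c * (1 + ln T)) * (S T + s * ln (T + 1))"
    by (rule suffix_rec[OF c(1) s S0 rec T])
  have SQ: "S 0 = Q (Suc T)" unfolding S_def R_def by simp
  have RT: "R T = (\<Sum>t\<le>T. Q (Suc t))" unfolding R_def by (intro sum.cong) auto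
  have "(\<Sum>t\<le>T. Q t) \<le> Q 0 + (\<Sum>t\<le>T. Q (Suc t))"
    using sum_shift_le[OF Q0, of 0 T] by (simp add: atLeast0AtMost)
  then have "c * (\<Sum>t\<le>T. Q t) \<le> c * (Q 0 + R T)" using c RT by (intro mult_left_mono) auto
  with avg RT have "R T * (1 - c) \<le> A + c * Q 0 + (T+1) * s" by (simp add: algebra_simps)
  then have "R T \<le> (A + c * Q 0 + (T+1) * s) / (1 - c)" using c by (simp add: field_simps)
  then have "R T / (real T + 1) \<le> ((A + c * Q 0 + (T+1) * s) / (1 - c)) / (real T + 1)"
    by (rule divide_right_mono) simp
  then have ST: "S T \<le> (A + c * Q 0 + (T+1) * s) / ((1 - c) * (T+1))"
    unfolding S_def by (simp add: divide_divide_eq_left ac_simps)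
  have "Q (Suc T) \<le> exp (c * (1 + ln T)) * (S T + s * ln (T + 1))" using main SQ by simp
  also have "\<dots> \<le> exp (c * (1 + ln T)) * ((A + c * Q 0 + (T+1) * s) / ((1 - c) * (T+1)) + s * ln (T + 1))"
    using ST s by (intro mult_left_mono add_mono) auto
  finally show ?thesis by simp
qed

lemma norm_diff_sq: "(norm (a - b))\<^sup>2 = (norm a)\<^sup>2 - 2 * (a \<bullet> b) + (norm b)\<^sup>2"
  for a b :: "'a::real_inner"
  by (simp add: power2_norm_eq_inner inner_diff_left inner_diff_right inner_commute)

lemma g_lower_ball:
  fixes g :: "'a::euclidean_space \<Rightarrow> real"
  assumes cl: "closed {(x, t). x \<in> C \<and> g x \<le> t}"
  shows "\<exists>m. \<forall>x\<in>C \<inter> cball z0 1. m \<le> g x"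
proof (rule ccontr)
  assume "\<not> ?thesis"
  then have ex: "\<And>m. \<exists>x\<in>C \<inter> cball z0 1. g x < m" by (meson not_le)
  define E where "E = {(x, t). x \<in> C \<and> g x \<le> t}"
  define F where "F n = cball z0 1 \<inter> (\<lambda>x. (x, - real n)) -` E" for n :: nat
  have "compact (F n)" for n
  proof -
    have "closed ((\<lambda>x. (x, - real n)) -` E)"
      unfolding E_def by (rule continuous_closed_vimage[OF cl]) (auto intro!: continuous_intros)
    then show ?thesis unfolding F_def by (intro compact_Int_closed) auto
  qed
  moreover have "F n \<noteq> {}" for n
    using ex[of "- real n"] unfolding F_def E_def by force
  moreover have "F n \<subseteq> F m" if "m \<le> n" for m n
    using that unfolding F_def E_def by auto
  ultimately have "\<Inter>(range F) \<noteq> {}" by (intro compact_nest) auto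
  then obtain x where x: "\<And>n. x \<in> F n" by blast
  obtain n :: nat where "- g x < n" using reals_Archimedean2 by blast
  with x[of n] show False unfolding F_def E_def by auto
qed

lemma g_lower_affine:
  fixes g :: "'a::euclidean_space \<Rightarrow> real"
  assumes cl: "closed {(x, t). x \<in> C \<and> g x \<le> t}" and C: "convex C" and g: "convex_on C g"
    and z0: "z0 \<in> C"
  shows "\<exists>a\<ge>0. \<forall>x\<in>C. g z0 - a - a * norm (x - z0) \<le> g x"
proof -
  from g_lower_ball[OF cl, of z0] obtain m where m0: "\<forall>x\<in>C \<inter> cball z0 1. m \<le> g x" by blast
  then have m: "\<And>x. x \<in> C \<Longrightarrow> x \<in> cball z0 1 \<Longrightarrow> m \<le> g x" by blast
  have mz: "m \<le> g z0" using m[OF z0] by simp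
  define a where "a = g z0 - m"
  have "g z0 - a - a * norm (x - z0) \<le> g x" if x: "x \<in> C" for x
  proof (cases "norm (x - z0) \<le> 1")
    case True
    then have "m \<le> g x" using m[OF x] by (simp add: dist_norm norm_minus_commute)
    then show ?thesis unfolding a_def using mz by (smt (verit) mult_nonneg_nonneg norm_ge_zero)
  next
    case False
    define r where "r = norm (x - z0)"
    have r1: "r > 1" using False unfolding r_def by simp
    define w where "w = (1 - 1/r) *\<^sub>R z0 + (1/r) *\<^sub>R x"
    have wC: "w \<in> C" unfolding w_def using r1 z0 x C by (intro convexD) auto
    have "w - z0 = (1/r) *\<^sub>R (x - z0)" unfolding w_def by (simp add: algebra_simps)
    then have "norm (w - z0) = 1" using r1 unfolding r_def by (auto simp: norm_minus_commute)
    then have "m \<le> g w" using m[OF wC] by (simp add: dist_norm norm_minus_commute)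
    also have "g w \<le> (1 - 1/r) * g z0 + (1/r) * g x"
      unfolding w_def using r1 z0 x by (intro convex_onD[OF g]) auto
    finally have "r * m \<le> r * ((1 - 1/r) * g z0 + (1/r) * g x)" using r1 by simp
    also have "\<dots> = (r - 1) * g z0 + g x" using r1 by (simp add: field_simps)
    finally have "g x \<ge> g z0 - r * a" unfolding a_def by (simp add: algebra_simps)
    moreover have "a \<ge> 0" unfolding a_def using mz by simp
    ultimately show ?thesis unfolding r_def by (simp add: mult.commute)
  qed
  moreover have "a \<ge> 0" unfolding a_def using mz by simp
  ultimately show ?thesis by blast
qed

lemma prox_exists:
  fixes g :: "'a::euclidean_space \<Rightarrow> real"
  assumes cl: "closed {(x, t). x \<in> C \<and> g x \<le> t}" and C: "convex C" and g: "convex_on C g"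
    and Cne: "C \<noteq> {}" and tau: "\<tau> > 0"
  shows "\<exists>p\<in>C. \<forall>z\<in>C. \<tau> * g p + (norm (y - p))\<^sup>2 / 2 \<le> \<tau> * g z + (norm (y - z))\<^sup>2 / 2"
proof -
  obtain z0 where z0: "z0 \<in> C" using Cne by blast
  obtain a where a0: "a \<ge> 0" and a: "\<And>x. x \<in> C \<Longrightarrow> g z0 - a - a * norm (x - z0) \<le> g x"
    using g_lower_affine[OF cl C g z0] by blast
  define E where "E = {(x, t). x \<in> C \<and> g x \<le> t}"
  define \<phi>0 where "\<phi>0 = \<tau> * g z0 + (norm (y - z0))\<^sup>2 / 2"
  define \<psi> where "\<psi> = (\<lambda>(x::'a, t::real). \<tau> * t + (norm (y - x))\<^sup>2 / 2)"
  define W where "W = E \<inter> {p. \<psi> p \<le> \<phi>0}"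
  have cont: "continuous_on UNIV \<psi>"
    unfolding \<psi>_def case_prod_unfold by (intro continuous_intros) auto
  have "closed W"
    unfolding W_def E_def
    by (intro closed_Int cl closed_Collect_le continuous_on_const) (use cont in auto)
  define K where "K = \<phi>0 - \<tau> * g z0 + \<tau> * a + \<tau> * a * norm (y - z0)"
  define M where "M = 4 * K + 4 * (\<tau> * a)\<^sup>2"
  have bnd: "norm (y - x) \<le> 1 + M \<and> \<bar>t\<bar> \<le> \<bar>\<phi>0 / \<tau>\<bar> + \<bar>g z0 - a - a * (1 + M + norm (y - z0))\<bar>"
    if xt: "(x, t) \<in> W" for x t
  proof -
    have xC: "x \<in> C" and gt: "g x \<le> t" and le: "\<tau> * t + (norm (y - x))\<^sup>2 / 2 \<le> \<phi>0"
      using xt unfolding W_def E_def \<psi>_def by auto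
    have tri: "norm (x - z0) \<le> norm (y - x) + norm (y - z0)"
      by (metis norm_diff_triangle_le norm_minus_commute order_refl)
    have glow: "g x \<ge> g z0 - a - a * (norm (y - x) + norm (y - z0))"
      using a[OF xC] mult_left_mono[OF tri a0] by linarith
    define u where "u = norm (y - x)"
    have u0: "u \<ge> 0" unfolding u_def by simp
    have "\<tau> * t \<ge> \<tau> * (g z0 - a - a * (u + norm (y - z0)))"
      using glow gt tau unfolding u_def by (intro mult_left_mono) auto
    then have "u\<^sup>2 / 2 \<le> K + \<tau> * a * u" using le unfolding K_def u_def by (simp add: algebra_simps)
    moreover have "\<tau> * a * u \<le> (\<tau> * a)\<^sup>2 + u\<^sup>2 / 4"
      using sum_squares_ge_zero[of "\<tau> * a - u / 2" 0] by (simp add: power2_eq_square algebra_simps)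
    ultimately have u2: "u\<^sup>2 \<le> M" unfolding M_def by simp
    have u1: "u \<le> 1 + M"
    proof (cases "u \<le> 1")
      case True then show ?thesis using u2 by (smt (verit) zero_le_power2)
    next
      case False then have "u \<le> u\<^sup>2" by (simp add: power2_eq_square)
      then show ?thesis using u2 by simp
    qed
    have "\<tau> * t \<le> \<phi>0" using le zero_le_power2[of "norm (y - x)"] by linarith
    then have tup: "t \<le> \<phi>0 / \<tau>" using tau by (simp add: field_simps)
    have "a * (u + norm (y - z0)) \<le> a * (1 + M + norm (y - z0))"
      using u1 a0 by (intro mult_left_mono) auto
    then have tlo: "t \<ge> g z0 - a - a * (1 + M + norm (y - z0))" using glow gt unfolding u_def by linarith
    show ?thesis using u1 tup tlo unfolding u_def by (smt (verit))
  qed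
  have "bounded W"
  proof -
    have "W \<subseteq> cball y (1 + M) \<times> cball 0 (\<bar>\<phi>0 / \<tau>\<bar> + \<bar>g z0 - a - a * (1 + M + norm (y - z0))\<bar>)"
      using bnd by (force simp: dist_norm)
    then show ?thesis by (rule bounded_subset[rotated]) (intro bounded_Times bounded_cball)
  qed
  with \<open>closed W\<close> have "compact W" by (simp add: compact_eq_bounded_closed)
  moreover have "(z0, g z0) \<in> W" unfolding W_def E_def \<psi>_def \<phi>0_def using z0 by auto
  ultimately obtain pt where pt: "pt \<in> W" and ptmin: "\<And>q. q \<in> W \<Longrightarrow> \<psi> pt \<le> \<psi> q"
    using continuous_attains_inf[of W \<psi>] cont continuous_on_subset by blast
  obtain p tp where pt_eq: "pt = (p, tp)" by (cases pt)
  have pC: "p \<in> C" and gp: "g p \<le> tp" and ple: "\<psi> (p, tp) \<le> \<phi>0"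
    using pt unfolding pt_eq W_def E_def by auto
  have "\<psi> (p, g p) \<le> \<psi> (p, tp)" unfolding \<psi>_def using gp tau by simp
  show ?thesis
  proof (intro bexI[OF _ pC] ballI)
    fix z assume zC: "z \<in> C"
    have "\<psi> (p, g p) \<le> \<psi> (z, g z)"
    proof (cases "\<psi> (z, g z) \<le> \<phi>0")
      case True
      then have "(z, g z) \<in> W" unfolding W_def E_def using zC by auto
      then show ?thesis using ptmin[of "(z, g z)"] \<open>\<psi> (p, g p) \<le> \<psi> (p, tp)\<close> pt_eq by simp
    next
      case False
      then show ?thesis using ple \<open>\<psi> (p, g p) \<le> \<psi> (p, tp)\<close> by simp
    qed
    then show "\<tau> * g p + (norm (y - p))\<^sup>2 / 2 \<le> \<tau> * g z + (norm (y - z))\<^sup>2 / 2"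
      unfolding \<psi>_def by simp
  qed
qed

lemma aux_var_eq:
  fixes t gp gz N X D s :: real
  shows "t * ((1 - s) * gp + s * gz) + (N - 2 * s * X + s\<^sup>2 * D) / 2 - (t * gp + N / 2)
     = s * (t * (gz - gp) - X + s / 2 * D)"
  by (simp add: field_simps power2_eq_square)

lemma prox_variational:
  fixes g :: "'a::real_inner \<Rightarrow> real"
  assumes C: "convex C" and g: "convex_on C g" and tau: "\<tau> > 0"
    and pC: "p \<in> C" and pmin: "\<forall>z\<in>C. \<tau> * g p + (norm (y - p))\<^sup>2 / 2 \<le> \<tau> * g z + (norm (y - z))\<^sup>2 / 2"
    and zC: "z \<in> C"
  shows "\<tau> * g p + (norm (y - p))\<^sup>2 / 2 + (norm (p - z))\<^sup>2 / 2 \<le> \<tau> * g z + (norm (y - z))\<^sup>2 / 2"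
proof -
  define d where "d = z - p"
  define \<Delta> where "\<Delta> = \<tau> * (g z - g p) - (y - p) \<bullet> d"
  have key: "0 \<le> \<Delta> + s / 2 * (norm d)\<^sup>2" if s: "0 < s" "s \<le> 1" for s
  proof -
    define w where "w = (1 - s) *\<^sub>R p + s *\<^sub>R z"
    have wC: "w \<in> C" unfolding w_def using s pC zC C by (intro convexD) auto
    have gw: "g w \<le> (1 - s) * g p + s * g z" unfolding w_def using s pC zC by (intro convex_onD[OF g]) auto
    have yw: "y - w = (y - p) - s *\<^sub>R d" unfolding w_def d_def by (simp add: algebra_simps)
    have nw: "(norm (y - w))\<^sup>2 = (norm (y - p))\<^sup>2 - 2 * s * ((y - p) \<bullet> d) + s\<^sup>2 * (norm d)\<^sup>2"
      unfolding yw norm_diff_sq by (simp add: power2_eq_square algebra_simps)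
    have "\<tau> * g p + (norm (y - p))\<^sup>2 / 2 \<le> \<tau> * g w + (norm (y - w))\<^sup>2 / 2" using pmin wC by blast
    also have "\<dots> \<le> \<tau> * ((1 - s) * g p + s * g z) + (norm (y - w))\<^sup>2 / 2"
      using gw tau by simp
    finally have "0 \<le> s * (\<tau> * (g z - g p) - (y - p) \<bullet> d + s / 2 * (norm d)\<^sup>2)"
      unfolding nw using aux_var_eq[of \<tau> s "g p" "g z" "(norm (y - p))\<^sup>2" "(y - p) \<bullet> d" "(norm d)\<^sup>2"]
      by linarith
    then show ?thesis unfolding \<Delta>_def using s by (simp add: zero_le_mult_iff)
  qed
  have "\<Delta> \<ge> 0"
  proof (rule ccontr)
    assume neg: "\<not> \<Delta> \<ge> 0"
    define q where "q = (norm d)\<^sup>2 + 1"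
    have q: "q > 0" unfolding q_def using zero_le_power2[of "norm d"] by linarith
    have nD: "- \<Delta> > 0" using neg by simp
    have r: "- \<Delta> / q > 0" using q nD by (simp add: divide_neg_pos)
    define s where "s = min 1 (- \<Delta> / q)"
    have s: "0 < s" "s \<le> 1" unfolding s_def using r by auto
    have "s * (norm d)\<^sup>2 \<le> (- \<Delta> / q) * (norm d)\<^sup>2"
      unfolding s_def by (intro mult_right_mono) auto
    also have "\<dots> < (- \<Delta> / q) * q"
      using r unfolding q_def by (intro mult_strict_left_mono) auto
    also have "\<dots> = - \<Delta>" using q by simp
    finally have "s / 2 * (norm d)\<^sup>2 < - \<Delta>" using nD by simp
    with key[OF s] show False by simp
  qed
  moreover have "(norm (y - z))\<^sup>2 = (norm (y - p))\<^sup>2 - 2 * ((y - p) \<bullet> d) + (norm d)\<^sup>2"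
  proof -
    have "y - z = (y - p) - d" unfolding d_def by simp
    then have "(norm (y - z))\<^sup>2 = (norm ((y - p) - d))\<^sup>2" by (simp only:)
    then show ?thesis by (simp only: norm_diff_sq)
  qed
  moreover have "norm (p - z) = norm d" unfolding d_def by (simp add: norm_minus_commute)
  ultimately show ?thesis unfolding \<Delta>_def by (simp add: algebra_simps)
qed

locale prox_setting =
  fixes C :: "'a::euclidean_space set" and g :: "'a \<Rightarrow> real"
  assumes cl: "closed {(x, t). x \<in> C \<and> g x \<le> t}" and C: "convex C" and g: "convex_on C g"
    and Cne: "C \<noteq> {}"
begin

lemma prox_char:
  assumes tau: "\<tau> > 0"
  shows "prox C g \<tau> y \<in> C"
    and "\<And>z. z \<in> C \<Longrightarrow> \<tau> * g (prox C g \<tau> y) + (norm (y - prox C g \<tau> y))\<^sup>2 / 2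
            + (norm (prox C g \<tau> y - z))\<^sup>2 / 2 \<le> \<tau> * g z + (norm (y - z))\<^sup>2 / 2"
proof -
  obtain p where pC: "p \<in> C" and pmin: "\<forall>z\<in>C. \<tau> * g p + (norm (y - p))\<^sup>2 / 2 \<le> \<tau> * g z + (norm (y - z))\<^sup>2 / 2"
    using prox_exists[OF cl C g Cne tau] by blast
  have eq: "prox C g \<tau> y = p"
    unfolding prox_def
  proof (rule the_equality)
    show "p \<in> C \<and> (\<forall>z\<in>C. \<tau> * g p + (norm (y - p))\<^sup>2 / 2 \<le> \<tau> * g z + (norm (y - z))\<^sup>2 / 2)"
      using pC pmin by blast
  next
    fix p' assume p': "p' \<in> C \<and> (\<forall>z\<in>C. \<tau> * g p' + (norm (y - p'))\<^sup>2 / 2 \<le> \<tau> * g z + (norm (y - z))\<^sup>2 / 2)"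
    have "\<tau> * g p + (norm (y - p))\<^sup>2 / 2 + (norm (p - p'))\<^sup>2 / 2 \<le> \<tau> * g p' + (norm (y - p'))\<^sup>2 / 2"
      using prox_variational[OF C g tau pC pmin] p' by blast
    moreover have "\<tau> * g p' + (norm (y - p'))\<^sup>2 / 2 \<le> \<tau> * g p + (norm (y - p))\<^sup>2 / 2"
      using p' pC by blast
    ultimately have "(norm (p - p'))\<^sup>2 \<le> 0" by linarith
    then show "p' = p" by simp
  qed
  show "prox C g \<tau> y \<in> C" using eq pC by simp
  show "\<And>z. z \<in> C \<Longrightarrow> \<tau> * g (prox C g \<tau> y) + (norm (y - prox C g \<tau> y))\<^sup>2 / 2
            + (norm (prox C g \<tau> y - z))\<^sup>2 / 2 \<le> \<tau> * g z + (norm (y - z))\<^sup>2 / 2"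
    unfolding eq using prox_variational[OF C g tau pC pmin] by blast
qed

lemma prox_nonexp:
  assumes tau: "\<tau> > 0"
  shows "norm (prox C g \<tau> y1 - prox C g \<tau> y2) \<le> norm (y1 - y2)"
proof -
  define p1 where "p1 = prox C g \<tau> y1"
  define p2 where "p2 = prox C g \<tau> y2"
  have A: "\<tau> * g p1 + (norm (y1 - p1))\<^sup>2 / 2 + (norm (p1 - p2))\<^sup>2 / 2 \<le> \<tau> * g p2 + (norm (y1 - p2))\<^sup>2 / 2"
    unfolding p1_def p2_def using prox_char[OF tau] by blast
  have B: "\<tau> * g p2 + (norm (y2 - p2))\<^sup>2 / 2 + (norm (p2 - p1))\<^sup>2 / 2 \<le> \<tau> * g p1 + (norm (y2 - p1))\<^sup>2 / 2"
    unfolding p1_def p2_def using prox_char[OF tau] by blast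
  have id: "(norm (y1 - p2))\<^sup>2 - (norm (y1 - p1))\<^sup>2 + (norm (y2 - p1))\<^sup>2 - (norm (y2 - p2))\<^sup>2
      = 2 * ((y1 - y2) \<bullet> (p1 - p2))"
    by (simp add: norm_diff_sq inner_diff_left inner_diff_right inner_commute algebra_simps)
  have "(norm (p1 - p2))\<^sup>2 \<le> (y1 - y2) \<bullet> (p1 - p2)"
    using A B id by (simp add: norm_minus_commute)
  also have "\<dots> \<le> norm (y1 - y2) * norm (p1 - p2)" by (rule norm_cauchy_schwarz)
  finally have "norm (p1 - p2) * norm (p1 - p2) \<le> norm (y1 - y2) * norm (p1 - p2)"
    by (simp add: power2_eq_square)
  then show ?thesis unfolding p1_def[symmetric] p2_def[symmetric]
    by (cases "norm (p1 - p2) = 0") (auto simp: mult_le_cancel_right)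
qed

lemma prox_continuous:
  assumes tau: "\<tau> > 0"
  shows "continuous_on UNIV (prox C g \<tau>)"
  by (rule lipschitz_on_continuous_on[of 1]) (auto intro!: lipschitz_onI simp: dist_norm prox_nonexp[OF tau])

end

locale smooth_fun =
  fixes \<phi> :: "'a::real_inner \<Rightarrow> real" and G :: "'a \<Rightarrow> 'a" and L :: real
  assumes deriv: "\<And>x. (\<phi> has_derivative (\<lambda>v. G x \<bullet> v)) (at x)"
    and lip: "\<And>x y. norm (G x - G y) \<le> L * norm (x - y)"
begin

lemma line_deriv:
  "((\<lambda>t. \<phi> (x + t *\<^sub>R d)) has_real_derivative (G (x + t *\<^sub>R d) \<bullet> d)) (at t)"
proof -
  have l: "((\<lambda>t. x + t *\<^sub>R d) has_derivative (\<lambda>h. h *\<^sub>R d)) (at t)"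
    by (auto intro!: derivative_eq_intros)
  have "((\<lambda>t. \<phi> (x + t *\<^sub>R d)) has_derivative (\<lambda>h. G (x + t *\<^sub>R d) \<bullet> (h *\<^sub>R d))) (at t)"
    by (rule has_derivative_compose[OF l deriv])
  then show ?thesis unfolding has_field_derivative_def
    by (rule has_derivative_eq_rhs) (auto simp: fun_eq_iff)
qed

lemma descent: "\<phi> y \<le> \<phi> x + G x \<bullet> (y - x) + L / 2 * (norm (y - x))\<^sup>2"
proof -
  define d where "d = y - x"
  define \<psi> where "\<psi> t = \<phi> (x + t *\<^sub>R d) - t * (G x \<bullet> d) - L * t\<^sup>2 / 2 * (norm d)\<^sup>2" for t
  define \<psi>' where "\<psi>' t = G (x + t *\<^sub>R d) \<bullet> d - G x \<bullet> d - L * t * (norm d)\<^sup>2" for t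
  have der: "DERIV \<psi> t :> \<psi>' t" for t
    unfolding \<psi>_def \<psi>'_def
    by (auto intro!: derivative_eq_intros line_deriv simp: power2_eq_square)
  obtain z where z: "0 < z" "z < 1" "\<psi> 1 - \<psi> 0 = (1 - 0) * \<psi>' z"
    using MVT2[of 0 1 \<psi> \<psi>'] der by auto
  have "G (x + z *\<^sub>R d) \<bullet> d - G x \<bullet> d = (G (x + z *\<^sub>R d) - G x) \<bullet> d" by (simp add: inner_diff_left)
  also have "\<dots> \<le> norm (G (x + z *\<^sub>R d) - G x) * norm d" by (rule norm_cauchy_schwarz)
  also have "\<dots> \<le> L * norm ((x + z *\<^sub>R d) - x) * norm d" by (intro mult_right_mono lip) simp
  also have "\<dots> = L * z * (norm d)\<^sup>2" using z by (simp add: power2_eq_square)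
  finally have "\<psi>' z \<le> 0" unfolding \<psi>'_def by simp
  then have "\<psi> 1 \<le> \<psi> 0" using z by simp
  then show ?thesis unfolding \<psi>_def d_def by simp
qed

lemma descent_lower: "\<phi> (x + s *\<^sub>R d) - \<phi> x \<ge> s * (G x \<bullet> d) - 3 / 2 * L * s\<^sup>2 * (norm d)\<^sup>2"
  if L0: "L \<ge> 0" for s
proof -
  define w where "w = x + s *\<^sub>R d"
  have "\<phi> x \<le> \<phi> w + G w \<bullet> (x - w) + L / 2 * (norm (x - w))\<^sup>2" by (rule descent)
  moreover have "x - w = - (s *\<^sub>R d)" unfolding w_def by simp
  moreover have "G w \<bullet> (s *\<^sub>R d) \<ge> s * (G x \<bullet> d) - L * s\<^sup>2 * (norm d)\<^sup>2"
  proof -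
    have "G w \<bullet> (s *\<^sub>R d) = s * (G x \<bullet> d) + (G w - G x) \<bullet> (s *\<^sub>R d)"
      by (simp add: inner_diff_left algebra_simps)
    moreover have "- ((G w - G x) \<bullet> (s *\<^sub>R d)) \<le> norm (G w - G x) * norm (s *\<^sub>R d)"
    proof -
      have "(G x - G w) \<bullet> (s *\<^sub>R d) \<le> norm (G x - G w) * norm (s *\<^sub>R d)" by (rule norm_cauchy_schwarz)
      moreover have "- ((G w - G x) \<bullet> (s *\<^sub>R d)) = (G x - G w) \<bullet> (s *\<^sub>R d)" by (simp add: inner_diff_left algebra_simps)
      moreover have "norm (G w - G x) = norm (G x - G w)" by (rule norm_minus_commute)
      ultimately show ?thesis by simp
    qed
    moreover have "norm (G w - G x) * norm (s *\<^sub>R d) \<le> L * norm (w - x) * norm (s *\<^sub>R d)"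
      by (intro mult_right_mono lip) simp
    moreover have "L * norm (w - x) * norm (s *\<^sub>R d) = L * s\<^sup>2 * (norm d)\<^sup>2"
      unfolding w_def by (simp add: power2_eq_square abs_mult_self_eq)
    ultimately show ?thesis by linarith
  qed
  moreover have "(norm (s *\<^sub>R d))\<^sup>2 = s\<^sup>2 * (norm d)\<^sup>2" by (simp add: power_mult_distrib)
  ultimately show ?thesis unfolding w_def by (simp add: algebra_simps)
qed

lemma first_order:
  assumes cvx: "convex_on UNIV \<phi>" and L0: "L \<ge> 0"
  shows "\<phi> y \<ge> \<phi> x + G x \<bullet> (y - x)"
proof -
  define d where "d = y - x"
  define \<Delta> where "\<Delta> = \<phi> y - \<phi> x - G x \<bullet> d"
  have key: "0 \<le> \<Delta> + 3 / 2 * L * s * (norm d)\<^sup>2" if s: "0 < s" "s \<le> 1" for s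
  proof -
    have "\<phi> ((1 - s) *\<^sub>R x + s *\<^sub>R y) \<le> (1 - s) * \<phi> x + s * \<phi> y"
      using s by (intro convex_onD[OF cvx]) auto
    moreover have "(1 - s) *\<^sub>R x + s *\<^sub>R y = x + s *\<^sub>R d" unfolding d_def by (simp add: algebra_simps)
    ultimately have "\<phi> (x + s *\<^sub>R d) - \<phi> x \<le> s * (\<phi> y - \<phi> x)" by (simp add: algebra_simps)
    with descent_lower[OF L0, where x=x and s=s and d=d] have "0 \<le> s * \<Delta> + 3 / 2 * L * s\<^sup>2 * (norm d)\<^sup>2"
      unfolding \<Delta>_def by (simp add: algebra_simps)
    also have "\<dots> = s * (\<Delta> + 3 / 2 * L * s * (norm d)\<^sup>2)" by (simp add: algebra_simps power2_eq_square)
    finally show ?thesis using s by (simp add: zero_le_mult_iff)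
  qed
  have "\<Delta> \<ge> 0"
  proof (rule ccontr)
    assume neg: "\<not> \<Delta> \<ge> 0"
    define q where "q = 3 / 2 * L * (norm d)\<^sup>2 + 1"
    have "3 / 2 * L * (norm d)\<^sup>2 \<ge> 0" using L0 by simp
    then have q: "q > 0" unfolding q_def by linarith
    have nD: "- \<Delta> > 0" using neg by simp
    have r: "- \<Delta> / q > 0" using q nD by (simp add: divide_neg_pos)
    define s where "s = min 1 (- \<Delta> / q)"
    have s: "0 < s" "s \<le> 1" unfolding s_def using r by auto
    have "s * (3 / 2 * L * (norm d)\<^sup>2) \<le> (- \<Delta> / q) * (3 / 2 * L * (norm d)\<^sup>2)"
      unfolding s_def using L0 by (intro mult_right_mono) auto
    also have "\<dots> < (- \<Delta> / q) * q"
      using r unfolding q_def by (intro mult_strict_left_mono) auto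
    also have "\<dots> = - \<Delta>" using q by simp
    finally have "3 / 2 * L * s * (norm d)\<^sup>2 < - \<Delta>" by (simp add: algebra_simps)
    with key[OF s] show False by simp
  qed
  then show ?thesis unfolding \<Delta>_def d_def by simp
qed

lemma cocoercive:
  assumes cvx: "convex_on UNIV \<phi>" and L0: "L > 0"
  shows "(norm (G x - G y))\<^sup>2 \<le> 2 * L * (\<phi> x - \<phi> y - G y \<bullet> (x - y))"
proof -
  define \<delta> where "\<delta> = G x - G y"
  define w where "w = x - (1 / L) *\<^sub>R \<delta>"
  have A: "\<phi> w \<le> \<phi> x + G x \<bullet> (w - x) + L / 2 * (norm (w - x))\<^sup>2" by (rule descent)
  have B: "\<phi> w \<ge> \<phi> y + G y \<bullet> (w - y)" using first_order[OF cvx] L0 by simp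
  have e1: "G x \<bullet> (w - x) = - (1 / L) * (G x \<bullet> \<delta>)" unfolding w_def by simp
  have e2: "G y \<bullet> (w - y) = G y \<bullet> (x - y) - (1 / L) * (G y \<bullet> \<delta>)"
    unfolding w_def by (simp add: inner_diff_right)
  have e3: "L / 2 * (norm (w - x))\<^sup>2 = (1 / (2 * L)) * (norm \<delta>)\<^sup>2"
    unfolding w_def using L0 by (simp add: power2_eq_square)
  have e4: "G x \<bullet> \<delta> - G y \<bullet> \<delta> = (norm \<delta>)\<^sup>2" unfolding \<delta>_def
    by (simp add: inner_diff_left power2_norm_eq_inner)
  from A B e1 e2 e3 have "(1 / L) * (G x \<bullet> \<delta> - G y \<bullet> \<delta>) - (1 / (2 * L)) * (norm \<delta>)\<^sup>2
      \<le> \<phi> x - \<phi> y - G y \<bullet> (x - y)" by (simp add: algebra_simps)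
  then have "(1 / (2 * L)) * (norm \<delta>)\<^sup>2 \<le> \<phi> x - \<phi> y - G y \<bullet> (x - y)"
    unfolding e4 using L0 by (simp add: field_simps)
  then show ?thesis unfolding \<delta>_def using L0 by (simp add: field_simps)
qed

end

lemma eps_arg:
  fixes \<Delta> K :: real
  assumes K: "K \<ge> 0" and H: "\<And>s. 0 < s \<Longrightarrow> s \<le> 1 \<Longrightarrow> 0 \<le> \<Delta> + s * K"
  shows "0 \<le> \<Delta>"
proof (rule ccontr)
  assume neg: "\<not> 0 \<le> \<Delta>"
  define q where "q = K + 1"
  have q: "q > 0" unfolding q_def using K by simp
  have nD: "- \<Delta> > 0" using neg by simp
  have r: "- \<Delta> / q > 0" using q nD by (simp add: divide_neg_pos)
  define s where "s = min 1 (- \<Delta> / q)"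
  have s: "0 < s" "s \<le> 1" unfolding s_def using r by auto
  have "s * K \<le> (- \<Delta> / q) * K" unfolding s_def using K by (intro mult_right_mono) auto
  also have "\<dots> < (- \<Delta> / q) * q" using r unfolding q_def by (intro mult_strict_left_mono) auto
  also have "\<dots> = - \<Delta>" using q by simp
  finally show False using H[OF s] by simp
qed

locale psgd_setting =
  fixes D :: "'i measure"
    and f :: "'i \<Rightarrow> 'a::euclidean_space \<Rightarrow> real"
    and G :: "'i \<Rightarrow> 'a \<Rightarrow> 'a"
    and C :: "'a set" and g :: "'a \<Rightarrow> real"
    and L :: real and xs :: 'a
  assumes D: "prob_space D"
    and L: "L > 0"
    and f_convex: "\<And>i. i \<in> space D \<Longrightarrow> convex_on UNIV (f i)"
    and f_grad: "\<And>i x. i \<in> space D \<Longrightarrow> (f i has_derivative (\<lambda>v. G i x \<bullet> v)) (at x)"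
    and f_lip: "\<And>i x y. i \<in> space D \<Longrightarrow> norm (G i x - G i y) \<le> L * norm (x - y)"
    and f_int: "\<And>x. integrable D (\<lambda>i. f i x)"
    and G_int: "\<And>x. integrable D (\<lambda>i. G i x)"
    and F_grad: "\<And>x. ((\<lambda>y. \<integral>i. f i y \<partial>D) has_derivative (\<lambda>v. (\<integral>i. G i x \<partial>D) \<bullet> v)) (at x)"
    and C_ne: "C \<noteq> {}" and C_convex: "convex C" and g_convex: "convex_on C g"
    and g_lsc: "closed {(x, t). x \<in> C \<and> g x \<le> t}"
    and xs_C: "xs \<in> C"
    and xs_min: "\<forall>y\<in>C. (\<integral>i. f i xs \<partial>D) + g xs \<le> (\<integral>i. f i y \<partial>D) + g y"
    and sigma_fin: "integrable D (\<lambda>i. (norm (G i xs))\<^sup>2)"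
begin

sublocale P: prob_space D by (rule D)
sublocale X: prox_setting C g by unfold_locales (use g_lsc C_convex g_convex C_ne in auto)

definition "F x = (\<integral>i. f i x \<partial>D)"
definition "GF x = (\<integral>i. G i x \<partial>D)"
definition "h x = F x + g x"
definition "hs = h xs"
definition "\<sigma>2 = (\<integral>i. (norm (G i xs))\<^sup>2 \<partial>D)"
definition "B x = F x - F xs - GF xs \<bullet> (x - xs)"

lemma smooth_i: "i \<in> space D \<Longrightarrow> smooth_fun (f i) (G i) L"
  by unfold_locales (auto intro: f_grad f_lip)

lemma G_meas[measurable]: "(\<lambda>i. G i x) \<in> borel_measurable D"
  using G_int by (rule borel_measurable_integrable)

lemma f_meas[measurable]: "(\<lambda>i. f i x) \<in> borel_measurable D"
  using f_int by (rule borel_measurable_integrable)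

lemma int_const[simp]: "integrable D (\<lambda>_. c)" for c :: "'b::{banach,second_countable_topology}"
  by simp

lemma int_inner_G[simp]: "integrable D (\<lambda>i. G i x \<bullet> v)"
  using G_int by (rule integrable_inner_left)

lemma int_Gdiff_sq: "integrable D (\<lambda>i. (norm (G i x - G i y))\<^sup>2)"
proof (rule Bochner_Integration.integrable_bound[OF int_const[of "(L * norm (x - y))\<^sup>2"]])
  show "(\<lambda>i. (norm (G i x - G i y))\<^sup>2) \<in> borel_measurable D" by measurable
  show "AE i in D. norm ((norm (G i x - G i y))\<^sup>2) \<le> norm ((L * norm (x - y))\<^sup>2)"
    using f_lip L by (auto intro!: AE_I2 power_mono)
qed

lemma sq_tri: "(norm (u + v))\<^sup>2 \<le> 2 * (norm u)\<^sup>2 + 2 * (norm v)\<^sup>2" for u v :: "'b::real_inner"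
proof -
  have "(norm (u + v))\<^sup>2 \<le> (norm u + norm v)\<^sup>2" by (intro power_mono norm_triangle_ineq) auto
  also have "\<dots> \<le> 2 * (norm u)\<^sup>2 + 2 * (norm v)\<^sup>2"
    using sum_squares_ge_zero[of "norm u - norm v" 0] by (simp add: power2_eq_square algebra_simps)
  finally show ?thesis .
qed

lemma int_G_sq: "integrable D (\<lambda>i. (norm (G i x))\<^sup>2)"
proof (rule Bochner_Integration.integrable_bound[OF Bochner_Integration.integrable_add[OF integrable_mult_right[OF int_Gdiff_sq[of x xs], of 2]
        integrable_mult_right[OF sigma_fin, of 2]]])
  show "(\<lambda>i. (norm (G i x))\<^sup>2) \<in> borel_measurable D" by measurable
  show "AE i in D. norm ((norm (G i x))\<^sup>2) \<le> norm (2 * (norm (G i x - G i xs))\<^sup>2 + 2 * (norm (G i xs))\<^sup>2)"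
    using sq_tri[of "G i x - G i xs" "G i xs" for i] by (auto intro!: AE_I2)
qed

lemma int_e_sq: "integrable D (\<lambda>i. (norm (v - G i x))\<^sup>2)"
proof (rule Bochner_Integration.integrable_bound[OF Bochner_Integration.integrable_add[OF int_const[of "2 * (norm v)\<^sup>2"]
        integrable_mult_right[OF int_G_sq[of x], of 2]]])
  show "(\<lambda>i. (norm (v - G i x))\<^sup>2) \<in> borel_measurable D" by measurable
  show "AE i in D. norm ((norm (v - G i x))\<^sup>2) \<le> norm (2 * (norm v)\<^sup>2 + 2 * (norm (G i x))\<^sup>2)"
    using sq_tri[of v "- G i x" for i] by (auto intro!: AE_I2)
qed

lemma int_shift_sq:
  fixes V :: "'i \<Rightarrow> 'a"
  assumes [measurable]: "V \<in> borel_measurable D" and iV2: "integrable D (\<lambda>i. (norm (V i))\<^sup>2)"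
  shows "integrable D (\<lambda>i. (norm (V i - m))\<^sup>2)"
proof (rule Bochner_Integration.integrable_bound[OF Bochner_Integration.integrable_add[OF
      integrable_mult_right[OF iV2, of 2] int_const[of "2 * (norm m)\<^sup>2"]]])
  show "(\<lambda>i. (norm (V i - m))\<^sup>2) \<in> borel_measurable D" by measurable
  show "AE i in D. norm ((norm (V i - m))\<^sup>2) \<le> norm (2 * (norm (V i))\<^sup>2 + 2 * (norm m)\<^sup>2)"
    using sq_tri[of "V i" "- m" for i] by (auto intro!: AE_I2)
qed

lemma var_combine:
  fixes e a b L' B' \<sigma> :: real
  shows "e \<le> 3 / 2 * a + 3 * b \<Longrightarrow> a \<le> 2 * L' * B' \<Longrightarrow> b \<le> \<sigma> \<Longrightarrow> e \<le> 3 * L' * B' + 3 * \<sigma>"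
  by linarith

lemma var_le:
  fixes V :: "'i \<Rightarrow> 'a"
  assumes iV: "integrable D V" and iV2: "integrable D (\<lambda>i. (norm (V i))\<^sup>2)"
  shows "(\<integral>i. (norm (V i - integral\<^sup>L D V))\<^sup>2 \<partial>D) \<le> (\<integral>i. (norm (V i))\<^sup>2 \<partial>D)"
proof -
  define m where "m = integral\<^sup>L D V"
  have eq: "(norm (V i - m))\<^sup>2 = (norm (V i))\<^sup>2 - 2 * (V i \<bullet> m) + (norm m)\<^sup>2" for i
    by (rule norm_diff_sq)
  have "(\<integral>i. (norm (V i - m))\<^sup>2 \<partial>D) = (\<integral>i. (norm (V i))\<^sup>2 - 2 * (V i \<bullet> m) + (norm m)\<^sup>2 \<partial>D)"
    unfolding eq ..
  also have "\<dots> = (\<integral>i. (norm (V i))\<^sup>2 \<partial>D) - 2 * (m \<bullet> m) + (norm m)\<^sup>2"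
    using iV iV2 unfolding m_def by (simp add: integral_add integral_diff P.prob_space)
  also have "\<dots> \<le> (\<integral>i. (norm (V i))\<^sup>2 \<partial>D)" by (simp add: power2_norm_eq_inner)
  finally show ?thesis unfolding m_def .
qed

lemma F_descent: "F y \<le> F x + GF x \<bullet> (y - x) + L / 2 * (norm (y - x))\<^sup>2"
proof -
  have "F y \<le> (\<integral>i. f i x + G i x \<bullet> (y - x) + L / 2 * (norm (y - x))\<^sup>2 \<partial>D)"
    unfolding F_def using f_int
    by (intro integral_mono smooth_fun.descent[OF smooth_i]) auto
  also have "\<dots> = F x + GF x \<bullet> (y - x) + L / 2 * (norm (y - x))\<^sup>2"
    unfolding F_def GF_def using f_int G_int by (simp add: P.prob_space)
  finally show ?thesis .
qed

lemma F_first_order: "F y \<ge> F x + GF x \<bullet> (y - x)"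
proof -
  have "F x + GF x \<bullet> (y - x) = (\<integral>i. f i x + G i x \<bullet> (y - x) \<partial>D)"
    unfolding F_def GF_def using f_int G_int by simp
  also have "\<dots> \<le> F y"
    unfolding F_def using f_int L
    by (intro integral_mono smooth_fun.first_order[OF smooth_i] f_convex) auto
  finally show ?thesis .
qed

lemma B_nonneg: "B x \<ge> 0"
  unfolding B_def using F_first_order[of xs x] by simp

lemma opt_cond:
  assumes xC: "x \<in> C"
  shows "B x \<le> h x - hs"
proof -
  define d where "d = x - xs"
  have key: "0 \<le> (GF xs \<bullet> d + (g x - g xs)) + s * (L / 2 * (norm d)\<^sup>2)" if s: "0 < s" "s \<le> 1" for s
  proof -
    define w where "w = (1 - s) *\<^sub>R xs + s *\<^sub>R x"
    have wC: "w \<in> C" unfolding w_def using s xC xs_C C_convex by (intro convexD) auto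
    have gw: "g w \<le> (1 - s) * g xs + s * g x"
      unfolding w_def using s xC xs_C by (intro convex_onD[OF g_convex]) auto
    have wd: "w - xs = s *\<^sub>R d" unfolding w_def d_def by (simp add: algebra_simps)
    have Fw: "F w \<le> F xs + s * (GF xs \<bullet> d) + L / 2 * s\<^sup>2 * (norm d)\<^sup>2"
      using F_descent[of w xs] unfolding wd by (simp add: power_mult_distrib)
    have "F xs + g xs \<le> F w + g w" using xs_min wC unfolding F_def by blast
    moreover have gw': "g w \<le> g xs + s * (g x - g xs)" using gw by (simp add: algebra_simps)
    ultimately have "0 \<le> s * (GF xs \<bullet> d) + L / 2 * s\<^sup>2 * (norm d)\<^sup>2 + s * (g x - g xs)"
      using Fw by linarith
    also have "\<dots> = s * ((GF xs \<bullet> d + (g x - g xs)) + s * (L / 2 * (norm d)\<^sup>2))"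
      by (simp add: algebra_simps power2_eq_square)
    finally show ?thesis using s by (simp add: zero_le_mult_iff)
  qed
  have "0 \<le> GF xs \<bullet> d + (g x - g xs)" by (rule eps_arg[OF _ key]) (use L in simp)
  then show ?thesis unfolding B_def h_def hs_def d_def by linarith
qed

lemma GF_int_diff: "(\<integral>i. G i x - G i y \<partial>D) = GF x - GF y"
  unfolding GF_def using G_int by simp

lemma cocoercive_int: "(\<integral>i. (norm (G i x - G i xs))\<^sup>2 \<partial>D) \<le> 2 * L * B x"
proof -
  have "(\<integral>i. (norm (G i x - G i xs))\<^sup>2 \<partial>D) \<le> (\<integral>i. 2 * L * (f i x - f i xs - G i xs \<bullet> (x - xs)) \<partial>D)"
    using int_Gdiff_sq f_int L
    by (intro integral_mono smooth_fun.cocoercive[OF smooth_i] f_convex) auto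
  also have "\<dots> = 2 * L * B x"
    unfolding B_def F_def GF_def using f_int G_int by simp
  finally show ?thesis .
qed

lemma var_bound: "(\<integral>i. (norm (GF x - G i x))\<^sup>2 \<partial>D) \<le> 3 * L * B x + 3 * \<sigma>2"
proof -
  define A where "A i = G i x - G i xs" for i
  have iA: "integrable D A" unfolding A_def using G_int by simp
  have EA: "integral\<^sup>L D A = GF x - GF xs" unfolding A_def by (rule GF_int_diff)
  have EB: "integral\<^sup>L D (\<lambda>i. G i xs) = GF xs" unfolding GF_def ..
  have pt: "(norm (GF x - G i x))\<^sup>2 \<le> 3 / 2 * (norm (A i - (GF x - GF xs)))\<^sup>2 + 3 * (norm (G i xs - GF xs))\<^sup>2" for i
  proof -
    have "GF x - G i x = - ((A i - (GF x - GF xs)) + (G i xs - GF xs))" unfolding A_def by simp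
    then have "(norm (GF x - G i x))\<^sup>2 = (norm ((A i - (GF x - GF xs)) + (G i xs - GF xs)))\<^sup>2"
      by (metis norm_minus_cancel)
    also have "\<dots> \<le> 3 / 2 * (norm (A i - (GF x - GF xs)))\<^sup>2 + 3 * (norm (G i xs - GF xs))\<^sup>2"
    proof -
      define u where "u = A i - (GF x - GF xs)"
      define v where "v = G i xs - GF xs"
      have "(norm (u + v))\<^sup>2 \<le> (norm u + norm v)\<^sup>2" by (intro power_mono norm_triangle_ineq) auto
      also have "\<dots> \<le> 3 / 2 * (norm u)\<^sup>2 + 3 * (norm v)\<^sup>2"
        using sum_squares_ge_zero[of "norm u / 2 - norm v" 0] by (simp add: power2_eq_square algebra_simps)
      finally show ?thesis unfolding u_def v_def .
    qed
    finally show ?thesis .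
  qed
  have mA[measurable]: "A \<in> borel_measurable D" unfolding A_def by measurable
  have i1: "integrable D (\<lambda>i. (norm (A i - (GF x - GF xs)))\<^sup>2)"
    by (rule int_shift_sq[OF mA]) (unfold A_def, rule int_Gdiff_sq)
  have i2: "integrable D (\<lambda>i. (norm (G i xs - GF xs))\<^sup>2)"
    by (rule int_shift_sq[OF G_meas sigma_fin])
  have s1: "(\<integral>i. (norm (GF x - G i x))\<^sup>2 \<partial>D)
      \<le> (\<integral>i. 3 / 2 * (norm (A i - (GF x - GF xs)))\<^sup>2 + 3 * (norm (G i xs - GF xs))\<^sup>2 \<partial>D)"
    using int_e_sq i1 i2 pt by (intro integral_mono) auto
  have s2: "(\<integral>i. 3 / 2 * (norm (A i - (GF x - GF xs)))\<^sup>2 + 3 * (norm (G i xs - GF xs))\<^sup>2 \<partial>D)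
     = 3 / 2 * (\<integral>i. (norm (A i - (GF x - GF xs)))\<^sup>2 \<partial>D) + 3 * (\<integral>i. (norm (G i xs - GF xs))\<^sup>2 \<partial>D)"
    using i1 i2 by simp
  have s3: "(\<integral>i. (norm (A i - (GF x - GF xs)))\<^sup>2 \<partial>D) \<le> (\<integral>i. (norm (A i))\<^sup>2 \<partial>D)"
    using var_le[OF iA] EA int_Gdiff_sq[of x xs] unfolding A_def by simp
  have s4: "(\<integral>i. (norm (A i))\<^sup>2 \<partial>D) \<le> 2 * L * B x" unfolding A_def by (rule cocoercive_int)
  have s5: "(\<integral>i. (norm (G i xs - GF xs))\<^sup>2 \<partial>D) \<le> \<sigma>2"
    using var_le[OF G_int sigma_fin] unfolding \<sigma>2_def GF_def by simp
  have s6: "(\<integral>i. (norm (A i - (GF x - GF xs)))\<^sup>2 \<partial>D) \<le> 2 * L * B x" using s3 s4 by (rule order_trans)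
  show ?thesis by (rule var_combine[OF s1[unfolded s2] s6 s5])
qed

end

context psgd_setting
begin

lemma h_ge: "x \<in> C \<Longrightarrow> h x \<ge> hs"
  using xs_min unfolding h_def hs_def F_def by auto

lemma vec_id:
  fixes x z p v w :: "'b::real_inner" and \<tau> :: real
  shows "(norm ((x - \<tau> *\<^sub>R v) - z))\<^sup>2 / 2 - (norm ((x - \<tau> *\<^sub>R v) - p))\<^sup>2 / 2 - (norm (p - z))\<^sup>2 / 2
     + \<tau> * (w \<bullet> (p - x) - w \<bullet> (z - x))
   = (norm (x - z))\<^sup>2 / 2 - (norm (x - p))\<^sup>2 / 2 - (norm (p - z))\<^sup>2 / 2
     + \<tau> * ((w - v) \<bullet> (x - z)) + \<tau> * ((w - v) \<bullet> (p - x))"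
  by (simp add: power2_norm_eq_inner inner_diff_left inner_diff_right inner_commute algebra_simps)
    (simp add: field_simps)

lemma young:
  fixes \<tau> c E P :: real
  assumes "c > 0" "E \<ge> 0" "P \<ge> 0"
  shows "\<tau> * E * P \<le> \<tau>\<^sup>2 / (2 * c) * E\<^sup>2 + c / 2 * P\<^sup>2"
proof -
  have "0 \<le> (\<tau> * E - c * P)\<^sup>2" by simp
  then have "2 * c * (\<tau> * E * P) \<le> \<tau>\<^sup>2 * E\<^sup>2 + c\<^sup>2 * P\<^sup>2" by (simp add: power2_eq_square algebra_simps)
  then have "\<tau> * E * P \<le> (\<tau>\<^sup>2 * E\<^sup>2 + c\<^sup>2 * P\<^sup>2) / (2 * c)" using assms by (simp add: field_simps)
  also have "\<dots> = \<tau>\<^sup>2 / (2 * c) * E\<^sup>2 + c / 2 * P\<^sup>2" using assms by (simp add: field_simps power2_eq_square)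
  finally show ?thesis .
qed

lemma pointwise:
  assumes tau: "\<tau> > 0" and tL: "\<tau> * L < 1"
    and xC: "x \<in> C" and zC: "z \<in> C" and i: "i \<in> space D"
  defines "p \<equiv> prox C g \<tau> (x - \<tau> *\<^sub>R G i x)"
  defines "e \<equiv> GF x - G i x"
  shows "h p - hs + 1 / (2 * \<tau>) * (norm (p - z))\<^sup>2
     \<le> 1 / (2 * \<tau>) * (norm (x - z))\<^sup>2 + (h z - hs) + e \<bullet> (x - z)
        + \<tau> / (2 * (1 - \<tau> * L)) * (norm e)\<^sup>2"
proof -
  define y where "y = x - \<tau> *\<^sub>R G i x"
  define A where "A = (norm (y - z))\<^sup>2 / 2 - (norm (y - p))\<^sup>2 / 2 - (norm (p - z))\<^sup>2 / 2"
  have pr: "\<tau> * g p + (norm (y - p))\<^sup>2 / 2 + (norm (p - z))\<^sup>2 / 2 \<le> \<tau> * g z + (norm (y - z))\<^sup>2 / 2"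
    unfolding p_def y_def using X.prox_char(2)[OF tau zC] by blast
  then have g1: "\<tau> * (g p - g z) \<le> A" unfolding A_def by (simp add: algebra_simps)
  have f1: "F p - F z \<le> GF x \<bullet> (p - x) - GF x \<bullet> (z - x) + L / 2 * (norm (p - x))\<^sup>2"
    using F_descent[of p x] F_first_order[of x z] by linarith
  have f2: "\<tau> * (F p - F z) \<le> \<tau> * (GF x \<bullet> (p - x) - GF x \<bullet> (z - x)) + \<tau> * L / 2 * (norm (p - x))\<^sup>2"
    using mult_left_mono[OF f1, of \<tau>] tau by (simp add: algebra_simps)
  have idv: "A + \<tau> * (GF x \<bullet> (p - x) - GF x \<bullet> (z - x))
     = (norm (x - z))\<^sup>2 / 2 - (norm (x - p))\<^sup>2 / 2 - (norm (p - z))\<^sup>2 / 2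
     + \<tau> * (e \<bullet> (x - z)) + \<tau> * (e \<bullet> (p - x))"
    unfolding A_def y_def e_def by (rule vec_id)
  define c where "c = 1 - \<tau> * L"
  have c0: "c > 0" unfolding c_def using tL by simp
  have yg: "\<tau> * (e \<bullet> (p - x)) \<le> \<tau>\<^sup>2 / (2 * c) * (norm e)\<^sup>2 + c / 2 * (norm (p - x))\<^sup>2"
  proof -
    have "\<tau> * (e \<bullet> (p - x)) \<le> \<tau> * norm e * norm (p - x)"
      using mult_left_mono[OF norm_cauchy_schwarz[of e "p - x"], of \<tau>] tau by (simp add: mult.assoc)
    also have "\<dots> \<le> \<tau>\<^sup>2 / (2 * c) * (norm e)\<^sup>2 + c / 2 * (norm (p - x))\<^sup>2"
      by (rule young[OF c0]) auto
    finally show ?thesis .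
  qed
  have hsplit: "\<tau> * (h p - h z) = \<tau> * (g p - g z) + \<tau> * (F p - F z)"
    unfolding h_def by (simp add: algebra_simps)
  have npx: "(norm (x - p))\<^sup>2 = (norm (p - x))\<^sup>2" by (simp add: norm_minus_commute)
  have cL: "\<tau> * L / 2 * (norm (p - x))\<^sup>2 + c / 2 * (norm (p - x))\<^sup>2 = (norm (p - x))\<^sup>2 / 2"
    unfolding c_def by (simp add: field_simps)
  have main: "\<tau> * (h p - h z) \<le> (norm (x - z))\<^sup>2 / 2 - (norm (p - z))\<^sup>2 / 2
       + \<tau> * (e \<bullet> (x - z)) + \<tau>\<^sup>2 / (2 * c) * (norm e)\<^sup>2"
    using hsplit g1 f2 idv yg npx cL by linarith
  have "\<tau> * ((h p - hs + 1 / (2 * \<tau>) * (norm (p - z))\<^sup>2)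
     - (1 / (2 * \<tau>) * (norm (x - z))\<^sup>2 + (h z - hs) + e \<bullet> (x - z) + \<tau> / (2 * c) * (norm e)\<^sup>2))
     = \<tau> * (h p - h z) - ((norm (x - z))\<^sup>2 / 2 - (norm (p - z))\<^sup>2 / 2
       + \<tau> * (e \<bullet> (x - z)) + \<tau>\<^sup>2 / (2 * c) * (norm e)\<^sup>2)"
    using tau c0 by (simp add: field_simps power2_eq_square)
  also have "\<dots> \<le> 0" using main by simp
  finally have "\<tau> * ((h p - hs + 1 / (2 * \<tau>) * (norm (p - z))\<^sup>2)
     - (1 / (2 * \<tau>) * (norm (x - z))\<^sup>2 + (h z - hs) + e \<bullet> (x - z) + \<tau> / (2 * c) * (norm e)\<^sup>2)) \<le> 0" .
  then show ?thesis unfolding c_def using tau by (simp add: mult_le_0_iff)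
qed

lemma int_e_lin: "integrable D (\<lambda>i. (GF x - G i x) \<bullet> v)"
  using G_int by (intro integrable_inner_left) auto

lemma int_e_zero: "(\<integral>i. (GF x - G i x) \<bullet> v \<partial>D) = 0"
proof -
  have "(\<integral>i. (GF x - G i x) \<bullet> v \<partial>D) = (\<integral>i. (GF x - G i x) \<partial>D) \<bullet> v"
    using G_int by (intro integral_inner_left) auto
  also have "(\<integral>i. (GF x - G i x) \<partial>D) = GF x - GF x"
    unfolding GF_def using G_int by (simp add: P.prob_space)
  finally show ?thesis by simp
qed

lemma inner_step:
  assumes tau: "\<tau> > 0" and tL: "\<tau> * L < 1" and xC: "x \<in> C" and zC: "z \<in> C"
  shows "(\<integral>\<^sup>+i. ennreal (h (prox C g \<tau> (x - \<tau> *\<^sub>R G i x)) - hs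
            + 1 / (2 * \<tau>) * (norm (prox C g \<tau> (x - \<tau> *\<^sub>R G i x) - z))\<^sup>2) \<partial>D)
     \<le> ennreal (1 / (2 * \<tau>) * (norm (x - z))\<^sup>2 + (h z - hs)
          + 3 * L * (\<tau> / (2 * (1 - \<tau> * L))) * (h x - hs) + 3 * (\<tau> / (2 * (1 - \<tau> * L))) * \<sigma>2)"
proof -
  define \<kappa> where "\<kappa> = \<tau> / (2 * (1 - \<tau> * L))"
  have k0: "\<kappa> \<ge> 0" unfolding \<kappa>_def using tau tL by simp
  define R where "R i = 1 / (2 * \<tau>) * (norm (x - z))\<^sup>2 + (h z - hs) + (GF x - G i x) \<bullet> (x - z)
      + \<kappa> * (norm (GF x - G i x))\<^sup>2" for i
  define P where "P i = prox C g \<tau> (x - \<tau> *\<^sub>R G i x)" for i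
  have PC: "P i \<in> C" for i unfolding P_def by (rule X.prox_char(1)[OF tau])
  have le: "h (P i) - hs + 1 / (2 * \<tau>) * (norm (P i - z))\<^sup>2 \<le> R i" if "i \<in> space D" for i
    unfolding P_def R_def \<kappa>_def by (rule pointwise[OF tau tL xC zC that])
  have nn: "0 \<le> h (P i) - hs + 1 / (2 * \<tau>) * (norm (P i - z))\<^sup>2" for i
    using h_ge[OF PC[of i]] tau by simp
  have iR: "integrable D R"
    unfolding R_def using int_e_lin int_e_sq by simp
  have "(\<integral>\<^sup>+i. ennreal (h (P i) - hs + 1 / (2 * \<tau>) * (norm (P i - z))\<^sup>2) \<partial>D) \<le> (\<integral>\<^sup>+i. ennreal (R i) \<partial>D)"
    using le by (intro nn_integral_mono ennreal_leI) auto
  also have "\<dots> = ennreal (\<integral>i. R i \<partial>D)"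
    using iR le nn by (intro nn_integral_eq_integral) (auto intro!: AE_I2 order_trans[OF nn])
  also have "ennreal (\<integral>i. R i \<partial>D) \<le> ennreal (1 / (2 * \<tau>) * (norm (x - z))\<^sup>2 + (h z - hs) + 3 * L * \<kappa> * (h x - hs) + 3 * \<kappa> * \<sigma>2)"
  proof (rule ennreal_leI)
    have e1: "(\<integral>i. R i \<partial>D) = 1 / (2 * \<tau>) * (norm (x - z))\<^sup>2 + (h z - hs) + \<kappa> * (\<integral>i. (norm (GF x - G i x))\<^sup>2 \<partial>D)"
      unfolding R_def using int_e_lin int_e_sq int_e_zero by (simp add: P.prob_space)
    have e2: "\<kappa> * (\<integral>i. (norm (GF x - G i x))\<^sup>2 \<partial>D) \<le> \<kappa> * (3 * L * (h x - hs) + 3 * \<sigma>2)"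
    proof -
      have "3 * L * B x \<le> 3 * L * (h x - hs)" using opt_cond[OF xC] L by (intro mult_left_mono) auto
      then show ?thesis using var_bound[of x] k0 by (intro mult_left_mono) auto
    qed
    have e3: "\<kappa> * (3 * L * (h x - hs) + 3 * \<sigma>2) = 3 * L * \<kappa> * (h x - hs) + 3 * \<kappa> * \<sigma>2"
      by (simp add: algebra_simps)
    show "(\<integral>i. R i \<partial>D) \<le> 1 / (2 * \<tau>) * (norm (x - z))\<^sup>2 + (h z - hs) + 3 * L * \<kappa> * (h x - hs) + 3 * \<kappa> * \<sigma>2"
      using e1 e2 e3 by linarith
  qed
  finally show ?thesis unfolding P_def \<kappa>_def by (simp add: mult.assoc)
qed

end

lemma floor_approx: "\<bar>of_int \<lfloor>c * t\<rfloor> / c - t\<bar> \<le> 1 / c" if "c > 0" for c t :: real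
proof -
  define u where "u = (of_int \<lfloor>c * t\<rfloor> :: real)"
  have "u \<le> c * t" "c * t < u + 1" unfolding u_def by linarith+
  then have a: "\<bar>u - c * t\<bar> \<le> 1" by linarith
  have "u / c - t = (u - c * t) / c" using that by (simp add: field_simps)
  then have "\<bar>u / c - t\<bar> = \<bar>u - c * t\<bar> / c" using that by simp
  also have "\<dots> \<le> 1 / c" using a that by (intro divide_right_mono) auto
  finally show ?thesis unfolding u_def .
qed

lemma caratheodory:
  fixes G :: "'i \<Rightarrow> 'a::euclidean_space \<Rightarrow> 'b::euclidean_space"
  assumes meas: "\<And>x. (\<lambda>i. G i x) \<in> borel_measurable M"
    and cont: "\<And>i. i \<in> space M \<Longrightarrow> continuous_on UNIV (G i)"
  shows "(\<lambda>p. G (fst p) (snd p)) \<in> borel_measurable (M \<Otimes>\<^sub>M borel)"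
proof -
  define r where "r n x = (\<Sum>b\<in>Basis. (of_int \<lfloor>real (Suc n) * (x \<bullet> b)\<rfloor> / real (Suc n)) *\<^sub>R b)"
    for n :: nat and x :: 'a
  define K where "K n = (\<lambda>k. \<Sum>b\<in>Basis. (of_int (k b) / real (Suc n)) *\<^sub>R (b::'a)) ` (PiE Basis (\<lambda>_. UNIV :: int set))"
    for n
  have Kc: "countable (K n)" for n
    unfolding K_def by (intro countable_image countable_PiE) auto
  have rK: "r n x \<in> K n" for n x
  proof -
    define k where "k = restrict (\<lambda>b. \<lfloor>real (Suc n) * (x \<bullet> b)\<rfloor>) Basis"
    have "k \<in> PiE Basis (\<lambda>_. UNIV)" unfolding k_def by auto
    moreover have "r n x = (\<Sum>b\<in>Basis. (of_int (k b) / real (Suc n)) *\<^sub>R b)"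
      unfolding r_def k_def by (intro sum.cong) auto
    ultimately show ?thesis unfolding K_def by blast
  qed
  have rmeas[measurable]: "r n \<in> borel_measurable borel" for n
    unfolding r_def by measurable
  have rconv: "(\<lambda>n. r n x) \<longlonglongrightarrow> x" for x
  proof -
    have bnd: "norm (r n x - x) \<le> real DIM('a) * inverse (real (Suc n))" for n
    proof -
      have "r n x - x = (\<Sum>b\<in>Basis. (of_int \<lfloor>real (Suc n) * (x \<bullet> b)\<rfloor> / real (Suc n) - x \<bullet> b) *\<^sub>R b)"
        unfolding r_def by (subst (3) euclidean_representation[symmetric]) (simp add: sum_subtractf scaleR_diff_left)
      also have "norm \<dots> \<le> (\<Sum>b\<in>Basis. norm ((of_int \<lfloor>real (Suc n) * (x \<bullet> b)\<rfloor> / real (Suc n) - x \<bullet> b) *\<^sub>R b))"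
        by (rule norm_sum)
      also have "\<dots> \<le> (\<Sum>b\<in>(Basis::'a set). inverse (real (Suc n)))"
        using floor_approx[of "real (Suc n)"] by (intro sum_mono) (simp add: divide_inverse)
      also have "\<dots> = real DIM('a) * inverse (real (Suc n))" by simp
      finally show ?thesis .
    qed
    have "(\<lambda>n. r n x - x) \<longlonglongrightarrow> 0"
      by (rule Lim_null_comparison[OF always_eventually[OF allI[OF bnd]]])
         (intro tendsto_mult_right_zero LIMSEQ_inverse_real_of_nat)
    then show ?thesis by (rule LIM_zero_cancel)
  qed
  have gm: "(\<lambda>p. G (fst p) (r n (snd p))) \<in> borel_measurable (M \<Otimes>\<^sub>M (borel :: 'a measure))" for n
  proof (rule measurable_compose_countable'[where f="\<lambda>k p. G (fst p) k" and g="\<lambda>p. r n (snd p)" and I="K n"])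
    show "(\<lambda>p. G (fst p) k) \<in> borel_measurable (M \<Otimes>\<^sub>M borel)" for k
      by (rule measurable_compose[OF measurable_fst meas])
    show "countable (K n)" by (rule Kc)
    have rb: "(\<lambda>p. r n (snd p)) \<in> borel_measurable (M \<Otimes>\<^sub>M (borel :: 'a measure))" by measurable
    show "(\<lambda>p. r n (snd p)) \<in> measurable (M \<Otimes>\<^sub>M (borel :: 'a measure)) (count_space (K n))"
      unfolding measurable_count_space_eq_countable[OF Kc]
    proof safe
      show "r n (snd p) \<in> K n" for p by (rule rK)
      show "(\<lambda>p. r n (snd p)) -` {a} \<inter> space (M \<Otimes>\<^sub>M (borel :: 'a measure)) \<in> sets (M \<Otimes>\<^sub>M (borel :: 'a measure))" for a
        using measurable_sets[OF rb, of "{a}"] by simp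
    qed
  qed
  show ?thesis
  proof (rule borel_measurable_LIMSEQ_metric[OF gm])
    fix p assume "p \<in> space (M \<Otimes>\<^sub>M (borel :: 'a measure))"
    then have "fst p \<in> space M" by (auto simp: space_pair_measure)
    then have c: "continuous_on UNIV (G (fst p))" by (rule cont)
    show "(\<lambda>n. G (fst p) (r n (snd p))) \<longlonglongrightarrow> G (fst p) (snd p)"
      by (rule continuous_on_tendsto_compose[OF c rconv]) auto
  qed
qed

lemma indep_step:
  fixes D :: "'i measure" and T t :: nat and \<Phi> :: "'i \<Rightarrow> 'b \<Rightarrow> ennreal"
    and \<psi> :: "(nat \<Rightarrow> 'i) \<Rightarrow> 'b" and R :: "'b \<Rightarrow> ennreal"
  assumes D: "prob_space D" and t: "t \<le> T"
    and m1: "(\<lambda>w. \<Phi> (w t) (\<psi> w)) \<in> borel_measurable (PiM {..T} (\<lambda>_. D))"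
    and m2: "(\<lambda>w. R (\<psi> w)) \<in> borel_measurable (PiM {..T} (\<lambda>_. D))"
    and inv: "\<And>w y. w \<in> space (PiM {..T} (\<lambda>_. D)) \<Longrightarrow> y \<in> space D \<Longrightarrow> \<psi> (w(t := y)) = \<psi> w"
    and bound: "\<And>w. w \<in> space (PiM {..T} (\<lambda>_. D)) \<Longrightarrow> (\<integral>\<^sup>+ y. \<Phi> y (\<psi> w) \<partial>D) \<le> R (\<psi> w)"
  shows "(\<integral>\<^sup>+w. \<Phi> (w t) (\<psi> w) \<partial>PiM {..T} (\<lambda>_. D)) \<le> (\<integral>\<^sup>+w. R (\<psi> w) \<partial>PiM {..T} (\<lambda>_. D))"
proof -
  interpret product_sigma_finite "\<lambda>_. D"
    using prob_space_imp_sigma_finite[OF D] by (simp add: product_sigma_finite_def)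
  interpret Dp: prob_space D by (rule D)
  define I where "I = {..T} - {t}"
  have TI: "{..T} = insert t I" and fI: "finite I" and tI: "t \<notin> I" unfolding I_def using t by auto
  obtain y0 where y0: "y0 \<in> space D" using Dp.not_empty by blast
  have sp: "x(t := y) \<in> space (PiM {..T} (\<lambda>_. D))" if "x \<in> space (PiM I (\<lambda>_. D))" "y \<in> space D" for x y
    using that unfolding TI space_PiM by (intro PiE_fun_upd) auto
  have psi_eq: "\<psi> (x(t := y)) = \<psi> (x(t := y0))" if "x \<in> space (PiM I (\<lambda>_. D))" "y \<in> space D" for x y
  proof -
    have "\<psi> ((x(t := y0))(t := y)) = \<psi> (x(t := y0))" by (rule inv[OF sp[OF that(1) y0] that(2)])
    then show ?thesis by simp
  qed
  have "(\<integral>\<^sup>+w. \<Phi> (w t) (\<psi> w) \<partial>PiM {..T} (\<lambda>_. D))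
      = (\<integral>\<^sup>+x. (\<integral>\<^sup>+y. \<Phi> ((x(t := y)) t) (\<psi> (x(t := y))) \<partial>D) \<partial>PiM I (\<lambda>_. D))"
    using product_nn_integral_insert[OF fI tI, of "\<lambda>w. \<Phi> (w t) (\<psi> w)"] m1 unfolding TI by simp
  also have "\<dots> = (\<integral>\<^sup>+x. (\<integral>\<^sup>+y. \<Phi> y (\<psi> (x(t := y0))) \<partial>D) \<partial>PiM I (\<lambda>_. D))"
    by (intro nn_integral_cong) (simp add: psi_eq)
  also have "\<dots> \<le> (\<integral>\<^sup>+x. R (\<psi> (x(t := y0))) \<partial>PiM I (\<lambda>_. D))"
    by (intro nn_integral_mono bound sp y0)
  also have "\<dots> = (\<integral>\<^sup>+x. (\<integral>\<^sup>+y. R (\<psi> (x(t := y0))) \<partial>D) \<partial>PiM I (\<lambda>_. D))"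
    by (intro nn_integral_cong) (simp add: Dp.emeasure_space_1)
  also have "\<dots> = (\<integral>\<^sup>+x. (\<integral>\<^sup>+y. R (\<psi> (x(t := y))) \<partial>D) \<partial>PiM I (\<lambda>_. D))"
    by (intro nn_integral_cong) (simp add: psi_eq)
  also have "\<dots> = (\<integral>\<^sup>+w. R (\<psi> w) \<partial>PiM {..T} (\<lambda>_. D))"
    using product_nn_integral_insert[OF fI tI, of "\<lambda>w. R (\<psi> w)"] m2 unfolding TI by simp
  finally show ?thesis .
qed

lemma telescope:
  fixes A B R :: "nat \<Rightarrow> real"
  assumes H: "\<And>t. m \<le> t \<Longrightarrow> t \<le> n \<Longrightarrow> A (Suc t) + B (Suc t) \<le> B t + R t"
    and mn: "m \<le> Suc n"
  shows "(\<Sum>t\<in>{m..n}. A (Suc t)) + B (Suc n) \<le> B m + (\<Sum>t\<in>{m..n}. R t)"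
  using H mn
proof (induction n)
  case 0
  then show ?case by (cases m) auto
next
  case (Suc n)
  show ?case
  proof (cases "m = Suc (Suc n)")
    case True then show ?thesis by simp
  next
    case False
    then have m: "m \<le> Suc n" using Suc.prems by simp
    have IH: "(\<Sum>t\<in>{m..n}. A (Suc t)) + B (Suc n) \<le> B m + (\<Sum>t\<in>{m..n}. R t)"
      using Suc.IH Suc.prems m by simp
    have st: "A (Suc (Suc n)) + B (Suc (Suc n)) \<le> B (Suc n) + R (Suc n)" using Suc.prems m by simp
    show ?thesis using IH st m by simp
  qed
qed

lemma enn_to_real:
  fixes a1 b1 b0 hz a0 :: ennreal and ca cc s0 :: real
  assumes H: "a1 + ennreal ca * b1 \<le> ennreal ca * b0 + hz + ennreal cc * a0 + ennreal s0"
    and fin: "b0 < top" "hz < top" "a0 < top" and c: "ca > 0" "cc \<ge> 0" "s0 \<ge> 0"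
  shows "a1 < top" "b1 < top"
    "enn2real a1 + ca * enn2real b1 \<le> ca * enn2real b0 + enn2real hz + cc * enn2real a0 + s0"
proof -
  obtain B0 where B0: "B0 \<ge> 0" "b0 = ennreal B0" using fin(1) less_top_ennreal by blast
  obtain Hz where Hz: "Hz \<ge> 0" "hz = ennreal Hz" using fin(2) less_top_ennreal by blast
  obtain A0 where A0: "A0 \<ge> 0" "a0 = ennreal A0" using fin(3) less_top_ennreal by blast
  define RR where "RR = ca * B0 + Hz + cc * A0 + s0"
  have RR0: "RR \<ge> 0" unfolding RR_def using B0 Hz A0 c by simp
  have Re: "ennreal ca * b0 + hz + ennreal cc * a0 + ennreal s0 = ennreal RR"
    unfolding RR_def B0 Hz A0 using B0 Hz A0 c by (simp add: ennreal_plus ennreal_mult)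
  have Hl: "a1 + ennreal ca * b1 \<le> ennreal RR" using H Re by simp
  then have "a1 + ennreal ca * b1 < top" using le_less_trans ennreal_less_top by blast
  then have t1: "a1 < top" and t2: "ennreal ca * b1 < top" by (auto simp: top_unique)
  show "a1 < top" by (rule t1)
  show "b1 < top" using t2 c by (auto simp: ennreal_mult_less_top)
  then obtain B1 where B1: "B1 \<ge> 0" "b1 = ennreal B1" using less_top_ennreal by blast
  obtain A1 where A1: "A1 \<ge> 0" "a1 = ennreal A1" using t1 less_top_ennreal by blast
  have "ennreal (A1 + ca * B1) \<le> ennreal RR" using Hl A1 B1 c by (simp add: ennreal_plus ennreal_mult)
  then have "A1 + ca * B1 \<le> RR" using RR0 by simp
  then show "enn2real a1 + ca * enn2real b1 \<le> ca * enn2real b0 + enn2real hz + cc * enn2real a0 + s0"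
    using A1 B1 B0 Hz A0 unfolding RR_def by simp
qed

locale psgd_run = psgd_setting +
  fixes \<tau> :: real and x0 and T :: nat
  assumes tau: "\<tau> > 0" and tL: "\<tau> * L < 1" and x0C: "x0 \<in> C"
begin

abbreviation "PP \<equiv> PiM {..T} (\<lambda>_. D)"

definition "X w t = psgd (prox C g \<tau>) G \<tau> x0 w t"

lemma X_0[simp]: "X w 0 = x0" unfolding X_def by simp

lemma X_Suc: "X w (Suc t) = prox C g \<tau> (X w t - \<tau> *\<^sub>R G (w t) (X w t))"
  unfolding X_def by simp

lemma X_C: "X w t \<in> C"
  by (cases t) (simp_all add: x0C X_Suc X.prox_char(1)[OF tau])

lemma X_local: "(\<And>s. s < t \<Longrightarrow> w s = w' s) \<Longrightarrow> X w t = X w' t"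
proof (induction t)
  case 0 then show ?case by simp
next
  case (Suc t)
  then have "X w t = X w' t" by simp
  moreover have "w t = w' t" using Suc.prems by simp
  ultimately show ?case by (simp add: X_Suc)
qed

lemma X_upd: "t \<le> s \<Longrightarrow> X (w(s := y)) t = X w t"
  by (rule X_local) auto

lemma G_cont: "i \<in> space D \<Longrightarrow> continuous_on UNIV (G i)"
  by (rule lipschitz_on_continuous_on[of L]) (auto intro!: lipschitz_onI simp: dist_norm f_lip L less_imp_le)

lemma G_joint[measurable]: "(\<lambda>p. G (fst p) (snd p)) \<in> borel_measurable (D \<Otimes>\<^sub>M borel)"
  by (rule caratheodory[OF G_meas G_cont])

lemma prox_meas[measurable]: "prox C g \<tau> \<in> borel_measurable borel"
  by (rule borel_measurable_continuous_onI[OF X.prox_continuous[OF tau]])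

lemma X_meas[measurable]: "t \<le> Suc T \<Longrightarrow> (\<lambda>w. X w t) \<in> borel_measurable PP"
proof (induction t)
  case 0 then show ?case by simp
next
  case (Suc t)
  then have IH[measurable]: "(\<lambda>w. X w t) \<in> borel_measurable PP" by simp
  have tT: "t \<in> {..T}" using Suc.prems by simp
  have c[measurable]: "(\<lambda>w. w t) \<in> measurable PP D" using measurable_component_singleton[OF tT, of "\<lambda>_. D"] by simp
  have pm: "(\<lambda>w. (w t, X w t)) \<in> measurable PP (D \<Otimes>\<^sub>M borel)" by measurable
  have Gm[measurable]: "(\<lambda>w. G (w t) (X w t)) \<in> borel_measurable PP"
    using measurable_compose[OF pm G_joint] by simp
  show ?case unfolding X_Suc by measurable
qed

lemma F_cont: "continuous_on UNIV F"
  unfolding F_def by (intro continuous_at_imp_continuous_on ballI has_derivative_continuous[OF F_grad])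

lemma F_meas[measurable]: "F \<in> borel_measurable borel"
  by (rule borel_measurable_continuous_onI[OF F_cont])

lemma g_comp_meas:
  assumes Y[measurable]: "Y \<in> borel_measurable M" and YC: "\<And>w. w \<in> space M \<Longrightarrow> Y w \<in> C"
  shows "(\<lambda>w. g (Y w)) \<in> borel_measurable M"
proof (rule borel_measurableI_le)
  fix a :: real
  define S where "S = (\<lambda>x. (x, a)) -` {(x, t). x \<in> C \<and> g x \<le> t}"
  have "closed S" unfolding S_def by (rule continuous_closed_vimage[OF g_lsc]) (auto intro!: continuous_intros)
  then have "Y -` S \<inter> space M \<in> sets M" by (intro measurable_sets[OF Y]) auto
  moreover have "{w \<in> space M. g (Y w) \<le> a} = Y -` S \<inter> space M" unfolding S_def using YC by auto
  ultimately show "{w \<in> space M. g (Y w) \<le> a} \<in> sets M" by simp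
qed

lemma h_gen_meas:
  assumes Y[measurable]: "Y \<in> borel_measurable M" and YC: "\<And>w. w \<in> space M \<Longrightarrow> Y w \<in> C"
  shows "(\<lambda>w. h (Y w)) \<in> borel_measurable M"
proof -
  have [measurable]: "(\<lambda>w. g (Y w)) \<in> borel_measurable M" by (rule g_comp_meas[OF Y YC])
  show ?thesis unfolding h_def by measurable
qed

lemma h_comp_meas[measurable]:
  assumes "t \<le> Suc T"
  shows "(\<lambda>w. h (X w t)) \<in> borel_measurable PP"
  by (rule h_gen_meas) (use assms X_C in auto)

definition "\<kappa> = \<tau> / (2 * (1 - \<tau> * L))"
definition "ca = 1 / (2 * \<tau>)"
definition "cc = 3 * L * \<kappa>"
definition "s0 = 3 * \<kappa> * \<sigma>2"

lemma step_expect: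
  assumes t: "t \<le> T" and Zm[measurable]: "Z \<in> borel_measurable PP" and ZC: "\<And>w. Z w \<in> C"
    and Zinv: "\<And>w y. Z (w(t := y)) = Z w"
  shows "(\<integral>\<^sup>+w. ennreal (h (X w (Suc t)) - hs + ca * (norm (X w (Suc t) - Z w))\<^sup>2) \<partial>PP)
    \<le> (\<integral>\<^sup>+w. ennreal (ca * (norm (X w t - Z w))\<^sup>2 + (h (Z w) - hs) + cc * (h (X w t) - hs) + s0) \<partial>PP)"
proof -
  define \<Phi> where "\<Phi> y p = ennreal (h (prox C g \<tau> (fst p - \<tau> *\<^sub>R G y (fst p))) - hs
      + ca * (norm (prox C g \<tau> (fst p - \<tau> *\<^sub>R G y (fst p)) - snd p))\<^sup>2)" for y p
  define \<psi> where "\<psi> w = (X w t, Z w)" for w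
  define R where "R p = ennreal (ca * (norm (fst p - snd p))\<^sup>2 + (h (snd p) - hs) + cc * (h (fst p) - hs) + s0)" for p
  have e1: "(\<lambda>w. \<Phi> (w t) (\<psi> w)) = (\<lambda>w. ennreal (h (X w (Suc t)) - hs + ca * (norm (X w (Suc t) - Z w))\<^sup>2))"
    unfolding \<Phi>_def \<psi>_def by (simp add: X_Suc)
  have e2: "(\<lambda>w. R (\<psi> w)) = (\<lambda>w. ennreal (ca * (norm (X w t - Z w))\<^sup>2 + (h (Z w) - hs) + cc * (h (X w t) - hs) + s0))"
    unfolding R_def \<psi>_def by simp
  have hZ[measurable]: "(\<lambda>w. h (Z w)) \<in> borel_measurable PP" by (rule h_gen_meas[OF Zm ZC])
  have tS: "Suc t \<le> Suc T" "t \<le> Suc T" using t by auto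
  have "(\<integral>\<^sup>+w. \<Phi> (w t) (\<psi> w) \<partial>PP) \<le> (\<integral>\<^sup>+w. R (\<psi> w) \<partial>PP)"
  proof (rule indep_step[OF D t])
    show "(\<lambda>w. \<Phi> (w t) (\<psi> w)) \<in> borel_measurable PP" unfolding e1 using tS by measurable
    show "(\<lambda>w. R (\<psi> w)) \<in> borel_measurable PP" unfolding e2 using tS by measurable
    show "\<psi> (w(t := y)) = \<psi> w" for w y unfolding \<psi>_def by (simp add: X_upd Zinv)
    show "(\<integral>\<^sup>+ y. \<Phi> y (\<psi> w) \<partial>D) \<le> R (\<psi> w)" for w
      unfolding \<Phi>_def \<psi>_def R_def ca_def cc_def s0_def \<kappa>_def
      using inner_step[OF tau tL X_C ZC, of w t w] by (simp add: mult.assoc)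
  qed
  then show ?thesis unfolding e1 e2 .
qed

lemma kappa_nn: "\<kappa> \<ge> 0" unfolding \<kappa>_def using tau tL by simp
lemma ca_pos: "ca > 0" unfolding ca_def using tau by simp
lemma cc_nn: "cc \<ge> 0" unfolding cc_def using kappa_nn L by simp
lemma sigma2_nn: "\<sigma>2 \<ge> 0" unfolding \<sigma>2_def by simp
lemma s0_nn: "s0 \<ge> 0" unfolding s0_def using kappa_nn sigma2_nn by simp

interpretation PPs: prob_space PP
  by (intro prob_space_PiM) (use D in auto)

definition "EQn t = (\<integral>\<^sup>+w. ennreal (h (X w t) - hs) \<partial>PP)"
definition "EDn t Z = (\<integral>\<^sup>+w. ennreal ((norm (X w t - Z w))\<^sup>2) \<partial>PP)"
definition "EHn Z = (\<integral>\<^sup>+w. ennreal (h (Z w) - hs) \<partial>PP)"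

lemma step_enn:
  assumes t: "t \<le> T" and Zm[measurable]: "Z \<in> borel_measurable PP" and ZC: "\<And>w. Z w \<in> C"
    and Zinv: "\<And>w y. Z (w(t := y)) = Z w"
  shows "EQn (Suc t) + ennreal ca * EDn (Suc t) Z \<le> ennreal ca * EDn t Z + EHn Z + ennreal cc * EQn t + ennreal s0"
proof -
  have hZ[measurable]: "(\<lambda>w. h (Z w)) \<in> borel_measurable PP" by (rule h_gen_meas[OF Zm ZC])
  have tS: "Suc t \<le> Suc T" "t \<le> Suc T" using t by auto
  have nX: "h (X w s) - hs \<ge> 0" for w s using h_ge[OF X_C] by simp
  have nZ: "h (Z w) - hs \<ge> 0" for w using h_ge[OF ZC] by simp
  have "(\<integral>\<^sup>+w. ennreal (h (X w (Suc t)) - hs + ca * (norm (X w (Suc t) - Z w))\<^sup>2) \<partial>PP)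
      = (\<integral>\<^sup>+w. ennreal (h (X w (Suc t)) - hs) + ennreal ca * ennreal ((norm (X w (Suc t) - Z w))\<^sup>2) \<partial>PP)"
    using nX ca_pos by (intro nn_integral_cong) (simp add: ennreal_plus ennreal_mult)
  also have "\<dots> = EQn (Suc t) + ennreal ca * EDn (Suc t) Z"
    unfolding EQn_def EDn_def using tS by (subst nn_integral_add) (measurable, simp add: nn_integral_cmult)
  finally have L1: "(\<integral>\<^sup>+w. ennreal (h (X w (Suc t)) - hs + ca * (norm (X w (Suc t) - Z w))\<^sup>2) \<partial>PP)
      = EQn (Suc t) + ennreal ca * EDn (Suc t) Z" .
  have "(\<integral>\<^sup>+w. ennreal (ca * (norm (X w t - Z w))\<^sup>2 + (h (Z w) - hs) + cc * (h (X w t) - hs) + s0) \<partial>PP)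
      = (\<integral>\<^sup>+w. ennreal ca * ennreal ((norm (X w t - Z w))\<^sup>2) + ennreal (h (Z w) - hs)
            + ennreal cc * ennreal (h (X w t) - hs) + ennreal s0 \<partial>PP)"
    using nX nZ ca_pos cc_nn s0_nn by (intro nn_integral_cong) (simp add: ennreal_plus ennreal_mult)
  also have "\<dots> = ennreal ca * EDn t Z + EHn Z + ennreal cc * EQn t + ennreal s0"
    unfolding EQn_def EDn_def EHn_def using tS
    by (simp add: nn_integral_add nn_integral_cmult PPs.emeasure_space_1)
  finally have R1: "(\<integral>\<^sup>+w. ennreal (ca * (norm (X w t - Z w))\<^sup>2 + (h (Z w) - hs) + cc * (h (X w t) - hs) + s0) \<partial>PP)
      = ennreal ca * EDn t Z + EHn Z + ennreal cc * EQn t + ennreal s0" .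
  show ?thesis using step_expect[OF t Zm ZC Zinv] unfolding L1 R1 .
qed

lemma EQn0: "EQn 0 = ennreal (h x0 - hs)"
  unfolding EQn_def by (simp add: PPs.emeasure_space_1)

lemma EDn0: "EDn 0 (\<lambda>_. z) = ennreal ((norm (x0 - z))\<^sup>2)"
  unfolding EDn_def by (simp add: PPs.emeasure_space_1)

lemma EHn_const: "z \<in> C \<Longrightarrow> h z = hs \<Longrightarrow> EHn (\<lambda>_. z) = 0"
  unfolding EHn_def by simp

lemma fin_xs: "t \<le> Suc T \<Longrightarrow> EQn t < top \<and> EDn t (\<lambda>_. xs) < top"
proof (induction t)
  case 0 then show ?case by (simp add: EQn0 EDn0)
next
  case (Suc t)
  then have t: "t \<le> T" and IH: "EQn t < top" "EDn t (\<lambda>_. xs) < top" by auto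
  have st: "EQn (Suc t) + ennreal ca * EDn (Suc t) (\<lambda>_. xs)
     \<le> ennreal ca * EDn t (\<lambda>_. xs) + EHn (\<lambda>_. xs) + ennreal cc * EQn t + ennreal s0"
    by (rule step_enn[OF t]) (auto simp: xs_C)
  have "EHn (\<lambda>_. xs) < top" using EHn_const[OF xs_C] hs_def by simp
  from enn_to_real[OF st IH(2) this IH(1) ca_pos cc_nn s0_nn] show ?case by simp
qed

lemma EDn_fin:
  assumes t: "t \<le> Suc T" and Zm[measurable]: "Z \<in> borel_measurable PP"
    and Zf: "(\<integral>\<^sup>+w. ennreal ((norm (Z w - xs))\<^sup>2) \<partial>PP) < top"
  shows "EDn t Z < top"
proof -
  have Xm[measurable]: "(\<lambda>w. X w t) \<in> borel_measurable PP" using t by simp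
  have "EDn t Z \<le> (\<integral>\<^sup>+w. ennreal 2 * ennreal ((norm (X w t - xs))\<^sup>2) + ennreal 2 * ennreal ((norm (Z w - xs))\<^sup>2) \<partial>PP)"
    unfolding EDn_def
  proof (intro nn_integral_mono)
    fix w
    have "(norm (X w t - Z w))\<^sup>2 \<le> 2 * (norm (X w t - xs))\<^sup>2 + 2 * (norm (xs - Z w))\<^sup>2"
      using sq_tri[of "X w t - xs" "xs - Z w"] by simp
    also have "(norm (xs - Z w)) = norm (Z w - xs)" by (rule norm_minus_commute)
    finally have "ennreal ((norm (X w t - Z w))\<^sup>2) \<le> ennreal (2 * (norm (X w t - xs))\<^sup>2 + 2 * (norm (Z w - xs))\<^sup>2)"
      by (rule ennreal_leI)
    also have "\<dots> = ennreal 2 * ennreal ((norm (X w t - xs))\<^sup>2) + ennreal 2 * ennreal ((norm (Z w - xs))\<^sup>2)"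
      by (simp add: ennreal_plus ennreal_mult)
    finally show "ennreal ((norm (X w t - Z w))\<^sup>2) \<le> ennreal 2 * ennreal ((norm (X w t - xs))\<^sup>2) + ennreal 2 * ennreal ((norm (Z w - xs))\<^sup>2)" .
  qed
  also have "\<dots> = ennreal 2 * EDn t (\<lambda>_. xs) + ennreal 2 * (\<integral>\<^sup>+w. ennreal ((norm (Z w - xs))\<^sup>2) \<partial>PP)"
    unfolding EDn_def by (simp add: nn_integral_add nn_integral_cmult)
  also have "\<dots> < top" using fin_xs[OF t] Zf by (simp add: ennreal_mult_less_top)
  finally show ?thesis .
qed

definition "Q t = enn2real (EQn t)"

lemma Q_nn: "Q t \<ge> 0" unfolding Q_def by simp

lemma step_real:
  assumes t: "t \<le> T" and Zm[measurable]: "Z \<in> borel_measurable PP" and ZC: "\<And>w. Z w \<in> C"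
    and Zinv: "\<And>w y. Z (w(t := y)) = Z w"
    and Zf: "(\<integral>\<^sup>+w. ennreal ((norm (Z w - xs))\<^sup>2) \<partial>PP) < top" and Hf: "EHn Z < top"
  shows "Q (Suc t) + ca * enn2real (EDn (Suc t) Z) \<le> ca * enn2real (EDn t Z) + enn2real (EHn Z) + cc * Q t + s0"
proof -
  have t1: "t \<le> Suc T" using t by simp
  have "EQn t < top" using fin_xs[OF t1] by simp
  from enn_to_real(3)[OF step_enn[OF t Zm ZC Zinv] EDn_fin[OF t1 Zm Zf] Hf this ca_pos cc_nn s0_nn]
  show ?thesis unfolding Q_def .
qed

lemma avg_ineq:
  assumes xh: "xh \<in> C" "h xh = hs"
  shows "(\<Sum>t\<le>T. Q (Suc t)) \<le> ca * (norm (x0 - xh))\<^sup>2 + cc * (\<Sum>t\<le>T. Q t) + (T+1) * s0"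
proof -
  define B where "B t = ca * enn2real (EDn t (\<lambda>_. xh))" for t
  have Zf: "(\<integral>\<^sup>+w. ennreal ((norm (xh - xs))\<^sup>2) \<partial>PP) < top"
    by (simp add: PPs.emeasure_space_1)
  have EH0: "EHn (\<lambda>_. xh) = 0" using EHn_const[OF xh] .
  have st: "Q (Suc t) + B (Suc t) \<le> B t + (cc * Q t + s0)" if "0 \<le> t" "t \<le> T" for t
  proof -
    have "Q (Suc t) + ca * enn2real (EDn (Suc t) (\<lambda>_. xh)) \<le> ca * enn2real (EDn t (\<lambda>_. xh)) + enn2real (EHn (\<lambda>_. xh)) + cc * Q t + s0"
      by (rule step_real[OF that(2)]) (use xh Zf EH0 in auto)
    then show ?thesis unfolding B_def EH0 by simp
  qed
  have "(\<Sum>t\<in>{0..T}. Q (Suc t)) + B (Suc T) \<le> B 0 + (\<Sum>t\<in>{0..T}. cc * Q t + s0)"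
    by (rule telescope[where A=Q and B=B and R="\<lambda>t. cc * Q t + s0", OF st]) auto
  moreover have "B (Suc T) \<ge> 0" unfolding B_def using ca_pos by simp
  moreover have "B 0 = ca * (norm (x0 - xh))\<^sup>2" unfolding B_def EDn0 by simp
  moreover have "(\<Sum>t\<in>{0..T}. cc * Q t + s0) = cc * (\<Sum>t\<le>T. Q t) + (T+1) * s0"
    by (simp add: sum.distrib sum_distrib_left atLeast0AtMost)
  ultimately show ?thesis by (simp add: atLeast0AtMost)
qed

lemma suf_ineq:
  assumes m: "m \<le> T"
  shows "(\<Sum>t\<in>{m..T}. Q (Suc t)) \<le> (T - m + 1) * Q m + cc * (\<Sum>t\<in>{m..T}. Q t) + (T - m + 1) * s0"
proof -
  define Z where "Z = (\<lambda>w. X w m)"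
  define B where "B t = ca * enn2real (EDn t Z)" for t
  have m1: "m \<le> Suc T" using m by simp
  have Zm[measurable]: "Z \<in> borel_measurable PP" unfolding Z_def using m1 by simp
  have Zf: "(\<integral>\<^sup>+w. ennreal ((norm (Z w - xs))\<^sup>2) \<partial>PP) < top"
    using fin_xs[OF m1] unfolding Z_def EDn_def by simp
  have EH: "EHn Z = EQn m" unfolding Z_def EHn_def EQn_def ..
  have Hf: "EHn Z < top" using fin_xs[OF m1] EH by simp
  have st: "Q (Suc t) + B (Suc t) \<le> B t + (Q m + cc * Q t + s0)" if "m \<le> t" "t \<le> T" for t
  proof -
    have Zi: "Z (w(t := y)) = Z w" for w y unfolding Z_def using that by (simp add: X_upd)
    have "Q (Suc t) + ca * enn2real (EDn (Suc t) Z) \<le> ca * enn2real (EDn t Z) + enn2real (EHn Z) + cc * Q t + s0"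
      by (rule step_real[OF that(2) Zm _ Zi Zf Hf]) (simp add: Z_def X_C)
    then show ?thesis unfolding B_def EH Q_def[symmetric] by simp
  qed
  have "(\<Sum>t\<in>{m..T}. Q (Suc t)) + B (Suc T) \<le> B m + (\<Sum>t\<in>{m..T}. Q m + cc * Q t + s0)"
    by (rule telescope[where A=Q and B=B and R="\<lambda>t. Q m + cc * Q t + s0", OF st]) (use m in auto)
  moreover have "B (Suc T) \<ge> 0" unfolding B_def using ca_pos by simp
  moreover have "B m = 0" unfolding B_def Z_def EDn_def by simp
  moreover have "(\<Sum>t\<in>{m..T}. Q m + cc * Q t + s0) = (T - m + 1) * Q m + cc * (\<Sum>t\<in>{m..T}. Q t) + (T - m + 1) * s0"
    using m by (simp add: sum.distrib sum_distrib_left of_nat_diff algebra_simps)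
  ultimately show ?thesis by simp
qed

lemma Q0: "Q 0 = h x0 - hs"
  unfolding Q_def EQn0 using h_ge[OF x0C] by simp

lemma EQ_last: "EQn (Suc T) = ennreal (Q (Suc T))"
  using fin_xs[of "Suc T"] unfolding Q_def by (simp add: less_top[symmetric])

lemma final_Q:
  assumes T1: "T \<ge> 1" and cc1: "cc < 1" and xh: "xh \<in> C" "h xh = hs"
  shows "Q (Suc T) \<le> exp (cc * (1 + ln T)) *
     ((ca * (norm (x0 - xh))\<^sup>2 + cc * Q 0 + (T+1) * s0) / ((1 - cc) * (T+1)) + s0 * ln (T+1))"
proof (rule last_iter_real[OF Q_nn cc_nn cc1 s0_nn _ T1])
  show "0 \<le> ca * (norm (x0 - xh))\<^sup>2" using ca_pos by simp
  show "(\<Sum>t\<le>T. Q (Suc t)) \<le> ca * (norm (x0 - xh))\<^sup>2 + cc * (\<Sum>t\<le>T. Q t) + (T+1) * s0"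
    by (rule avg_ineq[OF xh])
  show "(\<Sum>t\<in>{m..T}. Q (Suc t)) \<le> (T - m + 1) * Q m + cc * (\<Sum>t\<in>{m..T}. Q t) + (T - m + 1) * s0"
    if "1 \<le> m" "m \<le> T" for m
    by (rule suf_ineq[OF that(2)])
qed

end

lemma poly1: "(r::real) \<ge> 1 \<Longrightarrow> r * r * (3*r - 1) \<le> (6*r - 5) * (r * r + 1)"
proof -
  assume r: "r \<ge> 1"
  have rr: "r \<le> r * r" using r by (simp add: mult_le_cancel_left1) 
  have "(6*r - 5) * (r * r + 1) - r * r * (3*r - 1) = (r - 1) * (3*(r*r) - r + 5)"
    by (simp add: algebra_simps)
  also have "\<dots> \<ge> 0" using r rr by (intro mult_nonneg_nonneg) auto
  finally show ?thesis by simp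
qed

lemma term1:
  fixes r L d :: real
  assumes r: "r \<ge> 1" and L: "L > 0" and d: "d \<ge> 0"
  shows "3 * ((3 * L * r / 2) * d) / ((1 - 3 / (2 * (3*r - 1))) * (r * r + 1)) \<le> 9 * L * d / r"
proof -
  define a where "a = 3*r - 1"
  define b where "b = 6*r - 5"
  define c where "c = r * r + 1"
  have a: "a > 0" "b > 0" "c > 0" "r > 0" unfolding a_def b_def c_def using r by (auto simp: add_pos_nonneg)
  have e: "1 - 3 / (2 * a) = b / (2 * a)" using a unfolding b_def a_def by (simp add: field_simps)
  have p: "r * r * a \<le> b * c" using poly1[OF r] unfolding a_def b_def c_def .
  have "(9 * L * d) * (r * r * a) \<le> (9 * L * d) * (b * c)"
    using p L d by (intro mult_left_mono) auto
  then have "3 * ((3 * L * r / 2) * d) / ((b / (2 * a)) * c) \<le> 9 * L * d / r"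
    using a by (simp add: field_simps)
  then show ?thesis unfolding a_def[symmetric] c_def[symmetric] e .
qed

lemma term2:
  fixes r q :: real
  assumes r: "r \<ge> 1" and q: "q \<ge> 0"
  shows "3 * (3 / (2 * (3*r - 1)) * q) / ((1 - 3 / (2 * (3*r - 1))) * (r * r + 1)) \<le> 9 * q / (r * r)"
proof -
  define a where "a = 3*r - 1"
  define b where "b = 6*r - 5"
  define c where "c = r * r + 1"
  have a: "a > 0" "b > 0" "c > 0" "r > 0" unfolding a_def b_def c_def using r by (auto simp: add_pos_nonneg)
  have e: "1 - 3 / (2 * a) = b / (2 * a)" using a unfolding b_def a_def by (simp add: field_simps)
  have a2: "a \<ge> 1" unfolding a_def using r by simp
  have "r * r \<le> r * r * a" using a2 a by (simp add: mult_le_cancel_left1)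
  also have "\<dots> \<le> b * c" using poly1[OF r] unfolding a_def b_def c_def .
  finally have p: "r * r \<le> b * c" .
  have "(9 * q) * (r * r) \<le> (9 * q) * (b * c)" using p q by (intro mult_left_mono) auto
  then have "3 * (3 / (2 * a) * q) / ((b / (2 * a)) * c) \<le> 9 * q / (r * r)"
    using a by (simp add: field_simps)
  then show ?thesis unfolding a_def[symmetric] c_def[symmetric] e .
qed

lemma term3:
  fixes r L \<sigma> l :: real
  assumes r: "r \<ge> 1" and L: "L > 0" and \<sigma>: "\<sigma> \<ge> 0" and l: "l \<ge> 2/3"
  shows "3 * ((r * r + 1) * (3 * \<sigma> / (2 * L * (3*r - 1))) / ((1 - 3 / (2 * (3*r - 1))) * (r * r + 1))
           + (3 * \<sigma> / (2 * L * (3*r - 1))) * l)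
     \<le> 9 / r * (\<sigma> / L * (1 / (r * r) + 4 * l))"
proof -
  define a where "a = 3*r - 1"
  define b where "b = 6*r - 5"
  define c where "c = r * r + 1"
  have a: "a > 0" "b > 0" "c > 0" "r > 0" unfolding a_def b_def c_def using r by (auto simp: add_pos_nonneg)
  have e: "1 - 3 / (2 * a) = b / (2 * a)" using a unfolding b_def a_def by (simp add: field_simps)
  define k where "k = 9 * \<sigma> / L"
  have k: "k \<ge> 0" unfolding k_def using \<sigma> L by simp
  have lhs: "3 * (c * (3 * \<sigma> / (2 * L * a)) / ((b / (2 * a)) * c) + (3 * \<sigma> / (2 * L * a)) * l)
      = k * (1 / b + l / (2 * a))"
    unfolding k_def using a L by (simp add: field_simps)
  have rhs: "9 / r * (\<sigma> / L * (1 / (r * r) + 4 * l)) = k * (1 / (r * r * r) + 4 * l / r)"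
    unfolding k_def using a L by (simp add: field_simps)
  have i1: "l / (2 * a) \<le> l / (4 * r)"
    using l a r unfolding a_def by (intro divide_left_mono) (auto simp: mult_pos_pos)
  have i2: "1 / b \<le> 1 / r" using a r unfolding b_def by (intro divide_left_mono) auto
  have i3: "1 / r \<le> (15 / 4) * l / r" using l a by (intro divide_right_mono) auto
  have i4: "0 \<le> 1 / (r * r * r)" using a by simp
  have "1 / b + l / (2 * a) \<le> 1 / (r * r * r) + 4 * l / r"
  proof -
    have "l / (4 * r) = (1/4) * l / r" by simp
    moreover have "4 * l / r = 4 * (l / r)" "(15 / 4) * l / r = (15/4) * (l / r)" "(1/4) * l / r = (1/4) * (l / r)" by simp_all
    ultimately show ?thesis using i1 i2 i3 i4 by linarith
  qed
  then have "k * (1 / b + l / (2 * a)) \<le> k * (1 / (r * r * r) + 4 * l / r)" using k by (intro mult_left_mono)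
  then show ?thesis unfolding lhs[unfolded a_def b_def c_def, symmetric] rhs e[unfolded a_def b_def]
    unfolding a_def[symmetric] b_def[symmetric] c_def[symmetric] lhs rhs .
qed

lemma comb3:
  fixes e x y z u v w k :: real
  assumes "e \<le> 3 * (x + y + z)" "3 * x \<le> u" "3 * y \<le> v" "3 * z \<le> w" "u + v + w = k"
  shows "e \<le> k"
proof -
  have "3 * (x + y + z) = 3 * x + 3 * y + 3 * z" by simp
  then show ?thesis using assms by linarith
qed

lemma final_arith:
  fixes r L d q \<sigma> E l :: real
  assumes r: "r \<ge> 1" and L: "L > 0" and d: "d \<ge> 0" and q: "q \<ge> 0" and \<sigma>: "\<sigma> \<ge> 0"
    and E: "E \<ge> 0" "E \<le> 3" and l: "l \<ge> 2/3"
  shows "E * (((3 * L * r / 2) * d + 3 / (2 * (3*r - 1)) * q + (r * r + 1) * (3 * \<sigma> / (2 * L * (3*r - 1))))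
              / ((1 - 3 / (2 * (3*r - 1))) * (r * r + 1)) + (3 * \<sigma> / (2 * L * (3*r - 1))) * l)
     \<le> 9 / r * (L * d + 1 / r * q + \<sigma> / L * (1 / (r * r) + 4 * l))"
proof -
  define Y where "Y = (1 - 3 / (2 * (3*r - 1))) * (r * r + 1)"
  have a: "3*r - 1 > 0" "6*r - 5 > 0" "r * r + 1 > 0" "r > 0" using r by (auto simp: add_pos_nonneg)
  have e: "1 - 3 / (2 * (3*r - 1)) = (6*r - 5) / (2 * (3*r - 1))" using a by (simp add: field_simps)
  have Y: "Y > 0" unfolding Y_def e using a by simp
  define t1 where "t1 = (3 * L * r / 2) * d / Y"
  define t2 where "t2 = 3 / (2 * (3*r - 1)) * q / Y"
  define t3 where "t3 = (r * r + 1) * (3 * \<sigma> / (2 * L * (3*r - 1))) / Y + (3 * \<sigma> / (2 * L * (3*r - 1))) * l"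
  have t1n: "t1 \<ge> 0" unfolding t1_def using Y L d a by simp
  have t2n: "t2 \<ge> 0" unfolding t2_def using Y q a by simp
  have t3n: "t3 \<ge> 0" unfolding t3_def using Y L \<sigma> a l by simp
  have br: "((3 * L * r / 2) * d + 3 / (2 * (3*r - 1)) * q + (r * r + 1) * (3 * \<sigma> / (2 * L * (3*r - 1)))) / Y
       + (3 * \<sigma> / (2 * L * (3*r - 1))) * l = t1 + t2 + t3"
    unfolding t1_def t2_def t3_def by (simp add: add_divide_distrib)
  have s1: "E * (t1 + t2 + t3) \<le> 3 * (t1 + t2 + t3)" using E t1n t2n t3n by (intro mult_right_mono) auto
  have s2: "3 * t1 \<le> 9 * L * d / r" using term1[OF r L d] unfolding t1_def Y_def by simp
  have s3: "3 * t2 \<le> 9 * q / (r * r)" using term2[OF r q] unfolding t2_def Y_def by simp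
  have s4: "3 * t3 \<le> 9 / r * (\<sigma> / L * (1 / (r * r) + 4 * l))" using term3[OF r L \<sigma> l] unfolding t3_def Y_def .
  have s5: "9 * L * d / r + 9 * q / (r * r) + 9 / r * (\<sigma> / L * (1 / (r * r) + 4 * l))
      = 9 / r * (L * d + 1 / r * q + \<sigma> / L * (1 / (r * r) + 4 * l))"
    using a L by (simp add: field_simps)
  have "E * (t1 + t2 + t3) \<le> 9 / r * (L * d + 1 / r * q + \<sigma> / L * (1 / (r * r) + 4 * l))"
    by (rule comb3[OF s1 s2 s3 s4 s5])
  then show ?thesis unfolding Y_def[symmetric] br .
qed

lemma cc_bound:
  fixes r :: real
  assumes r: "r \<ge> 1"
  shows "3 / (2 * (3*r - 1)) * (1 + ln (r * r)) \<le> 1" and "3 / (2 * (3*r - 1)) < 1"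
proof -
  have a: "3*r - 1 > 0" using r by simp
  have "ln r \<le> r - 1" using r by (intro ln_le_minus_one) auto
  moreover have "ln (r * r) = 2 * ln r" using r by (simp add: ln_mult)
  ultimately have "1 + ln (r * r) \<le> 2 * r - 1" by simp
  moreover have "1 + ln (r * r) \<ge> 0"
  proof -
    have "1 \<le> r * r" using r mult_mono[OF r r] by simp
    then show ?thesis by simp
  qed
  ultimately have "3 / (2 * (3*r - 1)) * (1 + ln (r * r)) \<le> 3 / (2 * (3*r - 1)) * (2 * r - 1)"
    using a by (intro mult_left_mono) auto
  also have "\<dots> \<le> 1" using a by (simp add: field_simps)
  finally show "3 / (2 * (3*r - 1)) * (1 + ln (r * r)) \<le> 1" .
  show "3 / (2 * (3*r - 1)) < 1" using a r by (simp add: field_simps)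
qed

theorem theorem3p1:
  fixes D :: "'i measure"
    and f :: "'i \<Rightarrow> 'a::euclidean_space \<Rightarrow> real"
    and G :: "'i \<Rightarrow> 'a \<Rightarrow> 'a"
    and C :: "'a set" and g :: "'a \<Rightarrow> real"
    and L :: real and x0 xs :: 'a and T :: nat
  assumes D: "prob_space D"
    and L: "L > 0"
    and f_convex: "\<And>i. i \<in> space D \<Longrightarrow> convex_on UNIV (f i)"
    and f_grad: "\<And>i x. i \<in> space D \<Longrightarrow> (f i has_derivative (\<lambda>v. G i x \<bullet> v)) (at x)"
    and f_lip: "\<And>i x y. i \<in> space D \<Longrightarrow> norm (G i x - G i y) \<le> L * norm (x - y)"
    and f_int: "\<And>x. integrable D (\<lambda>i. f i x)"
    and G_int: "\<And>x. integrable D (\<lambda>i. G i x)"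
    and F_grad: "\<And>x. ((\<lambda>y. \<integral>i. f i y \<partial>D) has_derivative (\<lambda>v. (\<integral>i. G i x \<partial>D) \<bullet> v)) (at x)"
    and C_ne: "C \<noteq> {}" and C_convex: "convex C" and g_convex: "convex_on C g"
    and g_lsc: "closed {(x, t). x \<in> C \<and> g x \<le> t}"
    and xs_C: "xs \<in> C"
    and xs_min: "\<forall>y\<in>C. (\<integral>i. f i xs \<partial>D) + g xs \<le> (\<integral>i. f i y \<partial>D) + g y"
    and sigma_fin: "integrable D (\<lambda>i. (norm (G i xs))\<^sup>2)"
    and x0_C: "x0 \<in> C"
    and T: "T \<ge> 1"
  shows "(\<integral>\<^sup>+ \<omega>. ennreal
            ((\<integral>i. f i (psgd (prox C g (1 / (3 * L * sqrt (real T)))) G (1 / (3 * L * sqrt (real T))) x0 \<omega> (Suc T)) \<partial>D)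
             + g (psgd (prox C g (1 / (3 * L * sqrt (real T)))) G (1 / (3 * L * sqrt (real T))) x0 \<omega> (Suc T))
             - (INF y\<in>C. (\<integral>i. f i y \<partial>D) + g y))
          \<partial>(PiM {..T} (\<lambda>_. D)))
     \<le> ennreal (9 / sqrt (real T) *
          (L * (INF x\<in>{x \<in> C. \<forall>y\<in>C. (\<integral>i. f i x \<partial>D) + g x \<le> (\<integral>i. f i y \<partial>D) + g y}. (norm (x - x0))\<^sup>2)
           + 1 / sqrt (real T) * ((\<integral>i. f i x0 \<partial>D) + g x0 - (INF y\<in>C. (\<integral>i. f i y \<partial>D) + g y))
           + (\<integral>i. (norm (G i xs))\<^sup>2 \<partial>D) / L * (1 / real T + 4 * ln (real T + 1))))"
proof -
  define r where "r = sqrt (real T)"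
  have r1: "r \<ge> 1" unfolding r_def using T by simp
  have rT: "real T = r * r" unfolding r_def by simp
  define \<tau> where "\<tau> = 1 / (3 * L * sqrt (real T))"
  have tau: "\<tau> > 0" unfolding \<tau>_def using L T by simp
  have tL: "\<tau> * L = 1 / (3 * r)" unfolding \<tau>_def r_def using L by (simp add: field_simps)
  have tL1: "\<tau> * L < 1" unfolding tL using r1 by (simp add: field_simps)
  interpret R: psgd_run D f G C g L xs \<tau> x0 T
    by (rule psgd_run.intro[OF psgd_setting.intro[OF assms(1-15)] psgd_run_axioms.intro[OF tau tL1 x0_C]])
  have hF: "R.h x = (\<integral>i. f i x \<partial>D) + g x" for x unfolding R.h_def R.F_def ..
  have INFeq: "(INF y\<in>C. (\<integral>i. f i y \<partial>D) + g y) = R.hs"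
    unfolding R.hs_def hF[symmetric] using xs_C xs_min
    by (intro cInf_eq_minimum) (auto simp: hF)
  have LHS: "(\<integral>\<^sup>+ \<omega>. ennreal
            ((\<integral>i. f i (psgd (prox C g (1 / (3 * L * sqrt (real T)))) G (1 / (3 * L * sqrt (real T))) x0 \<omega> (Suc T)) \<partial>D)
             + g (psgd (prox C g (1 / (3 * L * sqrt (real T)))) G (1 / (3 * L * sqrt (real T))) x0 \<omega> (Suc T))
             - (INF y\<in>C. (\<integral>i. f i y \<partial>D) + g y))
          \<partial>(PiM {..T} (\<lambda>_. D))) = ennreal (R.Q (Suc T))"
    unfolding R.EQ_last[symmetric] R.EQn_def INFeq R.X_def \<tau>_def[symmetric] hF ..
  define M where "M = {x \<in> C. \<forall>y\<in>C. (\<integral>i. f i x \<partial>D) + g x \<le> (\<integral>i. f i y \<partial>D) + g y}"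
  have xsM: "xs \<in> M" unfolding M_def using xs_C xs_min by auto
  have hM: "x \<in> C \<and> R.h x = R.hs" if "x \<in> M" for x
  proof -
    have "x \<in> C" "R.h x \<le> R.h xs" using that xs_C unfolding M_def hF[symmetric] by auto
    moreover have "R.h xs \<le> R.h x" using xs_min \<open>x \<in> C\<close> unfolding hF[symmetric] by auto
    ultimately show ?thesis unfolding R.hs_def by simp
  qed
  have a: "3*r - 1 > 0" "r > 0" using r1 by auto
  have sT: "sqrt (real T) = r" unfolding r_def ..
  have ca: "R.ca = 3 * L * r / 2" unfolding R.ca_def unfolding \<tau>_def sT using L a by (simp add: field_simps)
  have ka: "R.\<kappa> = 1 / (2 * L * (3*r - 1))"
    unfolding R.\<kappa>_def tL unfolding \<tau>_def sT using L a by (simp add: field_simps)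
  have cc: "R.cc = 3 / (2 * (3*r - 1))" unfolding R.cc_def ka using L a by (simp add: field_simps)
  have s0: "R.s0 = 3 * R.\<sigma>2 / (2 * L * (3*r - 1))" unfolding R.s0_def ka using L a by (simp add: field_simps)
  have cc1: "R.cc < 1" unfolding cc using cc_bound(2)[OF r1] .
  define E where "E = exp (R.cc * (1 + ln (real T)))"
  have E0: "E \<ge> 0" unfolding E_def by simp
  have E3: "E \<le> 3"
  proof -
    have "R.cc * (1 + ln (real T)) \<le> 1" unfolding cc rT using cc_bound(1)[OF r1] .
    then have "E \<le> exp 1" unfolding E_def by simp
    then show ?thesis using exp_le by simp
  qed
  define l where "l = ln (real T + 1)"
  have l: "l \<ge> 2/3"
  proof -
    have lnm: "ln 2 \<le> ln (real T + 1)" using T by simp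
    show ?thesis unfolding l_def using lnm ln2_ge_two_thirds by linarith
  qed
  define q where "q = R.Q 0"
  have q0: "q \<ge> 0" unfolding q_def by (rule R.Q_nn)
  have \<sigma>0: "R.\<sigma>2 \<ge> 0" by (rule R.sigma2_nn)
  define \<alpha> where "\<alpha> = 9 / r * (1 / r * q + R.\<sigma>2 / L * (1 / (r * r) + 4 * l))"
  define \<beta> where "\<beta> = 9 / r * L"
  have \<beta>0: "\<beta> > 0" unfolding \<beta>_def using a L by simp
  have each: "R.Q (Suc T) \<le> \<alpha> + \<beta> * (norm (x - x0))\<^sup>2" if xM: "x \<in> M" for x
  proof -
    have xC: "x \<in> C" and hx: "R.h x = R.hs" using hM[OF xM] by auto
    have "R.Q (Suc T) \<le> exp (R.cc * (1 + ln T)) *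
       ((R.ca * (norm (x0 - x))\<^sup>2 + R.cc * R.Q 0 + (T+1) * R.s0) / ((1 - R.cc) * (T+1)) + R.s0 * ln (T+1))"
      by (rule R.final_Q[OF T cc1 xC hx])
    also have "\<dots> = E * (((3 * L * r / 2) * (norm (x - x0))\<^sup>2 + 3 / (2 * (3*r - 1)) * q + (r * r + 1) * (3 * R.\<sigma>2 / (2 * L * (3*r - 1))))
              / ((1 - 3 / (2 * (3*r - 1))) * (r * r + 1)) + (3 * R.\<sigma>2 / (2 * L * (3*r - 1))) * l)"
      unfolding E_def ca cc s0 q_def l_def using rT by (simp add: norm_minus_commute add.commute)
    also have "\<dots> \<le> 9 / r * (L * (norm (x - x0))\<^sup>2 + 1 / r * q + R.\<sigma>2 / L * (1 / (r * r) + 4 * l))"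
      by (rule final_arith[OF r1 L _ q0 \<sigma>0 E0 E3 l]) simp
    also have "\<dots> = \<alpha> + \<beta> * (norm (x - x0))\<^sup>2" unfolding \<alpha>_def \<beta>_def by (simp add: algebra_simps)
    finally show ?thesis .
  qed
  have "(R.Q (Suc T) - \<alpha>) / \<beta> \<le> (INF x\<in>M. (norm (x - x0))\<^sup>2)"
  proof (rule cINF_greatest)
    show "M \<noteq> {}" using xsM by blast
    show "(R.Q (Suc T) - \<alpha>) / \<beta> \<le> (norm (x - x0))\<^sup>2" if "x \<in> M" for x
      using each[OF that] \<beta>0 by (simp add: field_simps)
  qed
  then have Qb: "R.Q (Suc T) \<le> \<alpha> + \<beta> * (INF x\<in>M. (norm (x - x0))\<^sup>2)"
    using \<beta>0 by (simp add: field_simps)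
  have q_eq: "q = (\<integral>i. f i x0 \<partial>D) + g x0 - (INF y\<in>C. (\<integral>i. f i y \<partial>D) + g y)"
    unfolding q_def R.Q0 INFeq hF ..
  have "\<alpha> + \<beta> * (INF x\<in>M. (norm (x - x0))\<^sup>2) = 9 / sqrt (real T) *
          (L * (INF x\<in>{x \<in> C. \<forall>y\<in>C. (\<integral>i. f i x \<partial>D) + g x \<le> (\<integral>i. f i y \<partial>D) + g y}. (norm (x - x0))\<^sup>2)
           + 1 / sqrt (real T) * ((\<integral>i. f i x0 \<partial>D) + g x0 - (INF y\<in>C. (\<integral>i. f i y \<partial>D) + g y))
           + (\<integral>i. (norm (G i xs))\<^sup>2 \<partial>D) / L * (1 / real T + 4 * ln (real T + 1)))"
    unfolding \<alpha>_def \<beta>_def sT q_eq[symmetric] M_def[symmetric] l_def[symmetric] R.\<sigma>2_def[symmetric]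
    using rT by (simp add: algebra_simps)
  with Qb LHS show ?thesis by (simp add: ennreal_leI)
qed

end
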